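(* Let $\mathcal{C}$ be a harmonic curve in $\mathbb{P}^2$ and let $P\mapsto p$ be a polarity of $\mathbb{P}^2$ whose set of absolute points $\{P: P\in p\}$ is exactly $\mathcal{C}$. Let $\mathcal{Q}$ be a quadrangle with vertices $A,C,B,D$ (in cyclic order) all lying on $\mathcal{C}$. Then $\mathcal{C}_{\mathcal{Q}}=\mathcal{C}$ if and only if the pole of the diagonal line $A\vee B$ lies on the other diagonal line $C\vee D$. Moreover, for any three distinct points $A,C,B\in\mathcal{C}$, letting $Q$ be the pole of $q=A\vee B$ (equivalently $Q=a\wedge b$, where $a,b$ are the polars of $A,B$) and $D=C\cdot\rho_{Q,q}$, the points $A,C,B,D$ are in general position, $D\in\mathcal{C}$, and the quadrangle $\mathcal{Q}$ with vertices $A,C,B,D$ satisfies $\mathcal{C}_{\mathcal{Q}}=\mathcal{C}$.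
   Context: $\mathbb{P}^2$ denotes the projective plane over a field $F$ with $\operatorname{char}F\neq 2$. For distinct points $X,Y$, $X\vee Y$ is the line through them; for distinct lines $\ell,m$, $\ell\wedge m$ is their common point. Maps act on the right. Four distinct collinear points $A,C,B,D$ form a harmonic set with conjugate pairs $\{A,B\}$ and $\{C,D\}$ if the cross-ratio $(A,B;C,D)=-1$. Four distinct concurrent lines form a harmonic pencil with given conjugate pairs if some (equivalently every) line not through their common point meets them in a harmonic set with the corresponding conjugate pairs. For a point $P$ and a line $m$ with $P\notin m$, the harmonic reflection $\rho_{P,m}$ of $\mathbb{P}^2$ fixes $P$ and every point of $m$ and sends every other point $X$ to the harmonic conjugate of $X$ with respect to $P$ and $(X\vee P)\wedge m$. A polarity of $\mathbb{P}^2$ is a bijection $P\mapsto p$ from points to lines such that $P\in q\iff Q\in p$ for all points $P,Q$; $p$ is the polar of $P$ and $P$ the pole of $p$. A quadrangle $\mathcal{Q}$ with vertices $A,C,B,D$ (in cyclic order) consists of four points in general position (no three collinear) together with this cyclic order up to reversal; its diagonal lines are $A\vee B$ and $C\vee D$. The harmonic curve $\mathcal{C}_{\mathcal{Q}}$ is the set consisting of $A,C,B,D$ together with all points $Z\notin\{A,B,C,D\}$ such that $Z\vee A, Z\vee C, Z\vee B, Z\vee D$ are four distinct lines forming a harmonic pencil with conjugate pairs $\{Z\vee A,Z\vee B\}$ and $\{Z\vee C,Z\vee D\}$. A harmonic curve is any set of the form $\mathcal{C}_{\mathcal{Q}}$ (every harmonic curve is the set of absolute points of some polarity). *)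

theory Defs
  imports Main
begin

type_synonym 'a vec3 = "'a \<times> 'a \<times> 'a"

definition smult3 :: "'a::field \<Rightarrow> 'a vec3 \<Rightarrow> 'a vec3" where
  "smult3 c v = (case v of (x, y, z) \<Rightarrow> (c * x, c * y, c * z))"

definition add3 :: "'a::field vec3 \<Rightarrow> 'a vec3 \<Rightarrow> 'a vec3" where
  "add3 v w = (case v of (x, y, z) \<Rightarrow> case w of (x', y', z') \<Rightarrow> (x + x', y + y', z + z'))"

definition dot3 :: "'a::field vec3 \<Rightarrow> 'a vec3 \<Rightarrow> 'a" where
  "dot3 v w = (case v of (x, y, z) \<Rightarrow> case w of (x', y', z') \<Rightarrow> x * x' + y * y' + z * z')"

typedef (overloaded) ('a::field) proj =
  "{S :: 'a vec3 set. \<exists>v. v \<noteq> (0, 0, 0) \<and> S = {smult3 c v | c. True}}"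
  by (rule exI[of _ "{smult3 c (1, 0, 0) | c. True}"], rule CollectI, rule exI[of _ "(1, 0, 0)"]) simp

text \<open>Both points and lines of P^2 are represented by elements of type proj
(a line is given by a nonzero covector up to scaling).\<close>

type_synonym 'a point = "'a proj"
type_synonym 'a line = "'a proj"

definition rep :: "'a::field proj \<Rightarrow> 'a vec3" where
  "rep P = (SOME v. v \<noteq> (0, 0, 0) \<and> v \<in> Rep_proj P)"

definition incid :: "'a::field point \<Rightarrow> 'a line \<Rightarrow> bool" where
  "incid P l \<longleftrightarrow> dot3 (rep P) (rep l) = 0"

definition join :: "'a::field point \<Rightarrow> 'a point \<Rightarrow> 'a line" where
  "join X Y = (THE l. incid X l \<and> incid Y l)"

definition meet :: "'a::field line \<Rightarrow> 'a line \<Rightarrow> 'a point" where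
  "meet l m = (THE P. incid P l \<and> incid P m)"

definition collinear3 :: "'a::field point \<Rightarrow> 'a point \<Rightarrow> 'a point \<Rightarrow> bool" where
  "collinear3 X Y Z \<longleftrightarrow> (\<exists>l. incid X l \<and> incid Y l \<and> incid Z l)"

definition collinear4 :: "'a::field point \<Rightarrow> 'a point \<Rightarrow> 'a point \<Rightarrow> 'a point \<Rightarrow> bool" where
  "collinear4 X Y Z W \<longleftrightarrow> (\<exists>l. incid X l \<and> incid Y l \<and> incid Z l \<and> incid W l)"

definition cross_ratio :: "'a::field point \<Rightarrow> 'a point \<Rightarrow> 'a point \<Rightarrow> 'a point \<Rightarrow> 'a" where
  "cross_ratio A B C D =
     (THE r. \<exists>a b c d.
        rep C = add3 (smult3 a (rep A)) (smult3 b (rep B)) \<and>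
        rep D = add3 (smult3 c (rep A)) (smult3 d (rep B)) \<and>
        r = (b * c) / (a * d))"

definition harmonic_set :: "'a::field point \<Rightarrow> 'a point \<Rightarrow> 'a point \<Rightarrow> 'a point \<Rightarrow> bool" where
  "harmonic_set A B C D \<longleftrightarrow>
     distinct [A, B, C, D] \<and> collinear4 A B C D \<and> cross_ratio A B C D = -1"

definition harmonic_pencil :: "'a::field line \<Rightarrow> 'a line \<Rightarrow> 'a line \<Rightarrow> 'a line \<Rightarrow> bool" where
  "harmonic_pencil l1 l2 l3 l4 \<longleftrightarrow>
     distinct [l1, l2, l3, l4] \<and>
     (\<exists>Z. incid Z l1 \<and> incid Z l2 \<and> incid Z l3 \<and> incid Z l4 \<and>
        (\<exists>m. \<not> incid Z m \<and>
             harmonic_set (meet l1 m) (meet l2 m) (meet l3 m) (meet l4 m)))"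

definition harm_conj :: "'a::field point \<Rightarrow> 'a point \<Rightarrow> 'a point \<Rightarrow> 'a point" where
  "harm_conj P M X = (THE Y. harmonic_set P M X Y)"

definition harm_refl :: "'a::field point \<Rightarrow> 'a line \<Rightarrow> 'a point \<Rightarrow> 'a point" where
  "harm_refl P m X =
     (if X = P \<or> incid X m then X else harm_conj P (meet (join X P) m) X)"

definition polarity :: "('a::field point \<Rightarrow> 'a line) \<Rightarrow> bool" where
  "polarity pol \<longleftrightarrow> bij pol \<and> (\<forall>P Q. incid P (pol Q) \<longleftrightarrow> incid Q (pol P))"

definition absolute_points :: "('a::field point \<Rightarrow> 'a line) \<Rightarrow> 'a point set" where
  "absolute_points pol = {P. incid P (pol P)}"

definition pole :: "('a::field point \<Rightarrow> 'a line) \<Rightarrow> 'a line \<Rightarrow> 'a point" where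
  "pole pol q = inv pol q"

text \<open>Quadrangles: four points in general position (no three collinear), given in
cyclic order A, C, B, D; the diagonal lines are A \<or> B and C \<or> D.\<close>
definition general_position :: "'a::field point \<Rightarrow> 'a point \<Rightarrow> 'a point \<Rightarrow> 'a point \<Rightarrow> bool" where
  "general_position A C B D \<longleftrightarrow>
     distinct [A, C, B, D] \<and>
     \<not> collinear3 A C B \<and> \<not> collinear3 A C D \<and> \<not> collinear3 A B D \<and> \<not> collinear3 C B D"

definition hcurve :: "'a::field point \<Rightarrow> 'a point \<Rightarrow> 'a point \<Rightarrow> 'a point \<Rightarrow> 'a point set" where
  "hcurve A C B D =
     {A, C, B, D} \<union>
     {Z. Z \<notin> {A, B, C, D} \<and>
         harmonic_pencil (join Z A) (join Z B) (join Z C) (join Z D)}"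

definition is_harmonic_curve :: "'a::field point set \<Rightarrow> bool" where
  "is_harmonic_curve S \<longleftrightarrow>
     (\<exists>A C B D. general_position A C B D \<and> S = hcurve A C B D)"

end

theory Submission
  imports Defs
begin

lemma smult3_simp[simp]: "smult3 c (x,y,z) = (c*x, c*y, c*z)" by (simp add: smult3_def)
lemma add3_simp[simp]: "add3 (x,y,z) (x',y',z') = (x+x', y+y', z+z')" by (simp add: add3_def)
lemma dot3_simp[simp]: "dot3 (x,y,z) (x',y',z') = x*x'+y*y'+z*z'" by (simp add: dot3_def)

definition cross3 :: "'a::field vec3 \<Rightarrow> 'a vec3 \<Rightarrow> 'a vec3" where
  "cross3 v w = (case v of (x1,x2,x3) \<Rightarrow> case w of (y1,y2,y3) \<Rightarrow>
     (x2*y3 - x3*y2, x3*y1 - x1*y3, x1*y2 - x2*y1))"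
lemma cross3_simp[simp]: "cross3 (x1,x2,x3) (y1,y2,y3) = (x2*y3 - x3*y2, x3*y1 - x1*y3, x1*y2 - x2*y1)"
  by (simp add: cross3_def)

definition det3 :: "'a::field vec3 \<Rightarrow> 'a vec3 \<Rightarrow> 'a vec3 \<Rightarrow> 'a" where
  "det3 u v w = dot3 (cross3 u v) w"

definition pt :: "'a::field vec3 \<Rightarrow> 'a proj" where
  "pt v = Abs_proj {smult3 c v | c. True}"

lemma smult3_one[simp]: "smult3 1 v = v" by (cases v rule: prod_cases3) simp
lemma smult3_smult3[simp]: "smult3 a (smult3 b v) = smult3 (a*b) v" by (cases v rule: prod_cases3) simp
lemma smult3_zero_iff: "smult3 c v = (0,0,0) \<longleftrightarrow> c = 0 \<or> v = (0,0,0)"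
  by (cases v rule: prod_cases3) auto

lemma rep_props: "rep P \<noteq> (0,0,0) \<and> rep P \<in> Rep_proj P"
proof -
  obtain v where v: "v \<noteq> (0,0,0)" "Rep_proj P = {smult3 c v | c. True}" using Rep_proj[of P] unfolding mem_Collect_eq by blast
  have "\<exists>w. w \<noteq> (0,0,0) \<and> w \<in> Rep_proj P" using v by (intro exI[of _ v]) (auto intro: exI[of _ 1])
  thus ?thesis unfolding rep_def by (rule someI_ex)
qed

lemma rep_nz[simp]: "rep P \<noteq> (0,0,0)" using rep_props by blast

lemma Rep_proj_rep: "Rep_proj P = {smult3 c (rep P) | c. True}"
proof -
  obtain v where v: "v \<noteq> (0,0,0)" "Rep_proj P = {smult3 c v | c. True}" using Rep_proj[of P] unfolding mem_Collect_eq by blast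
  then obtain k where k: "rep P = smult3 k v" using rep_props[of P] by auto
  with rep_nz[of P] have "k \<noteq> 0" by (auto simp: smult3_zero_iff)
  have "{smult3 c v | c. True} = {smult3 c (rep P) | c. True}"
  proof (intro set_eqI iffI)
    fix x assume "x \<in> {smult3 c v | c. True}"
    then obtain c where "x = smult3 c v" by auto
    hence "x = smult3 (c/k) (rep P)" using k \<open>k\<noteq>0\<close> by simp
    thus "x \<in> {smult3 c (rep P) | c. True}" by blast
  next
    fix x assume "x \<in> {smult3 c (rep P) | c. True}"
    then obtain c where "x = smult3 c (rep P)" by auto
    hence "x = smult3 (c*k) v" using k by simp
    thus "x \<in> {smult3 c v | c. True}" by blast
  qed
  with v show ?thesis by simp
qed

lemma Rep_pt: "v \<noteq> (0,0,0) \<Longrightarrow> Rep_proj (pt v) = {smult3 c v | c. True}"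
  unfolding pt_def by (rule Abs_proj_inverse) blast

lemma rep_pt: assumes "v \<noteq> (0,0,0)" shows "\<exists>k. k \<noteq> 0 \<and> rep (pt v) = smult3 k v"
proof -
  obtain k where k: "rep (pt v) = smult3 k v" using rep_props[of "pt v"] Rep_pt[OF assms] by auto
  with rep_nz[of "pt v"] have "k \<noteq> 0" by (auto simp: smult3_zero_iff)
  with k show ?thesis by blast
qed

lemma pt_rep[simp]: "pt (rep P) = P"
  unfolding pt_def Rep_proj_rep[symmetric] by (rule Rep_proj_inverse)

lemma pt_smult: assumes "k \<noteq> 0" shows "pt (smult3 k v) = pt v"
proof -
  have "{smult3 c (smult3 k v) | c. True} = {smult3 c v | c. True}"
  proof (intro set_eqI iffI)
    fix x assume "x \<in> {smult3 c (smult3 k v) | c. True}"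
    thus "x \<in> {smult3 c v | c. True}" by auto
  next
    fix x assume "x \<in> {smult3 c v | c. True}"
    then obtain c where "x = smult3 c v" by auto
    hence "x = smult3 (c/k) (smult3 k v)" using assms by simp
    thus "x \<in> {smult3 c (smult3 k v) | c. True}" by blast
  qed
  thus ?thesis unfolding pt_def by simp
qed

lemma pt_eq_smult: assumes "v \<noteq> (0,0,0)" "pt v = pt w" "w \<noteq> (0,0,0)" shows "\<exists>k. k \<noteq> 0 \<and> w = smult3 k v"
proof -
  have "w \<in> Rep_proj (pt w)" using Rep_pt[OF assms(3)] by (auto intro: exI[of _ 1])
  then obtain k where k: "w = smult3 k v" using assms Rep_pt[OF assms(1)] by auto
  with assms(3) have "k \<noteq> 0" by (auto simp: smult3_zero_iff)
  with k show ?thesis by blast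
qed

lemma par_lemma: assumes "u \<noteq> (0,0,0)" "cross3 u r = (0,0,0)" shows "\<exists>k. r = smult3 k u"
proof -
  obtain u1 u2 u3 where u: "u = (u1,u2,u3)" by (cases u rule: prod_cases3)
  obtain r1 r2 r3 where r: "r = (r1,r2,r3)" by (cases r rule: prod_cases3)
  have e: "u2*r3 = u3*r2" "u3*r1 = u1*r3" "u1*r2 = u2*r1" using assms(2) by (auto simp: u r)
  show ?thesis
  proof (cases "u1 = 0")
    case False
    have "r2 = r1/u1*u2" "r3 = r1/u1*u3" "r1 = r1/u1*u1" using e False
      by (simp_all add: field_simps mult.commute)
    thus ?thesis by (intro exI[of _ "r1/u1"]) (simp add: u r)
  next
    case True note t1 = this
    show ?thesis
    proof (cases "u2 = 0")
      case False
      have "r2 = r2/u2*u2" "r3 = r2/u2*u3" "r1 = r2/u2*u1" using e False t1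
        by (simp_all add: field_simps mult.commute)
      thus ?thesis by (intro exI[of _ "r2/u2"]) (simp add: u r)
    next
      case True
      with t1 assms(1) have "u3 \<noteq> 0" by (auto simp: u)
      have "r2 = r3/u3*u2" "r3 = r3/u3*u3" "r1 = r3/u3*u1" using e \<open>u3\<noteq>0\<close> t1 True
        by (simp_all add: field_simps mult.commute)
      thus ?thesis by (intro exI[of _ "r3/u3"]) (simp add: u r)
    qed
  qed
qed

lemma cross_smult_zero: "cross3 u (smult3 k u) = (0,0,0)"
  by (cases u rule: prod_cases3) (simp add: algebra_simps)

lemma pt_eq_iff: assumes "v \<noteq> (0,0,0)" "w \<noteq> (0,0,0)" shows "pt v = pt w \<longleftrightarrow> cross3 v w = (0,0,0)"
proof
  assume "pt v = pt w"
  then obtain k where "w = smult3 k v" using pt_eq_smult assms by blast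
  thus "cross3 v w = (0,0,0)" by (simp add: cross_smult_zero)
next
  assume "cross3 v w = (0,0,0)"
  then obtain k where k: "w = smult3 k v" using par_lemma assms(1) by blast
  with assms(2) have "k \<noteq> 0" by (auto simp: smult3_zero_iff)
  thus "pt v = pt w" using k pt_smult by metis
qed

lemma dot3_smult_left: "dot3 (smult3 k v) w = k * dot3 v w"
  by (cases v rule: prod_cases3, cases w rule: prod_cases3) (simp add: algebra_simps)
lemma dot3_smult_right: "dot3 v (smult3 k w) = k * dot3 v w"
  by (cases v rule: prod_cases3, cases w rule: prod_cases3) (simp add: algebra_simps)
lemma dot3_comm: "dot3 v w = dot3 w v"
  by (cases v rule: prod_cases3, cases w rule: prod_cases3) (simp add: algebra_simps)

lemma incid_pt: assumes "v \<noteq> (0,0,0)" "w \<noteq> (0,0,0)" shows "incid (pt v) (pt w) \<longleftrightarrow> dot3 v w = 0"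
proof -
  obtain k where k: "k\<noteq>0" "rep (pt v) = smult3 k v" using rep_pt[OF assms(1)] by blast
  obtain l where l: "l\<noteq>0" "rep (pt w) = smult3 l w" using rep_pt[OF assms(2)] by blast
  show ?thesis unfolding incid_def using k l by (simp add: dot3_smult_left dot3_smult_right)
qed

lemma incid_sym: "incid P l = incid l P" unfolding incid_def by (simp add: dot3_comm)
lemma meet_eq_join: "meet l m = join l m"
proof -
  have "(\<lambda>P. incid P l \<and> incid P m) = (\<lambda>P. incid l P \<and> incid m P)"
    by (rule ext) (metis incid_sym)
  thus ?thesis unfolding meet_def join_def by simp
qed


lemma cross_add_left: "cross3 (add3 x y) z = add3 (cross3 x z) (cross3 y z)"
  by (cases x rule: prod_cases3, cases y rule: prod_cases3, cases z rule: prod_cases3) (simp add: algebra_simps)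
lemma cross_add_right: "cross3 z (add3 x y) = add3 (cross3 z x) (cross3 z y)"
  by (cases x rule: prod_cases3, cases y rule: prod_cases3, cases z rule: prod_cases3) (simp add: algebra_simps)
lemma cross_smult_left: "cross3 (smult3 k x) z = smult3 k (cross3 x z)"
  by (cases x rule: prod_cases3, cases z rule: prod_cases3) (simp add: algebra_simps)
lemma cross_smult_right: "cross3 z (smult3 k x) = smult3 k (cross3 z x)"
  by (cases x rule: prod_cases3, cases z rule: prod_cases3) (simp add: algebra_simps)
lemma cross_self[simp]: "cross3 x x = (0,0,0)"
  by (cases x rule: prod_cases3) (simp add: algebra_simps)
lemma cross_anti: "cross3 y x = smult3 (-1) (cross3 x y)"
  by (cases x rule: prod_cases3, cases y rule: prod_cases3) (simp add: algebra_simps)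
lemma cross_zero_right[simp]: "cross3 x (0,0,0) = (0,0,0)"
  by (cases x rule: prod_cases3) simp
lemma cross_zero_left[simp]: "cross3 (0,0,0) x = (0,0,0)"
  by (cases x rule: prod_cases3) simp
lemma dot_add_left: "dot3 (add3 x y) z = dot3 x z + dot3 y z"
  by (cases x rule: prod_cases3, cases y rule: prod_cases3, cases z rule: prod_cases3) (simp add: algebra_simps)
lemma dot_add_right: "dot3 z (add3 x y) = dot3 z x + dot3 z y"
  by (cases x rule: prod_cases3, cases y rule: prod_cases3, cases z rule: prod_cases3) (simp add: algebra_simps)
lemma dot_zero_right[simp]: "dot3 x (0,0,0) = 0" by (cases x rule: prod_cases3) simp
lemma dot_zero_left[simp]: "dot3 (0,0,0) x = 0" by (cases x rule: prod_cases3) simp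
lemma dot_cross_self1[simp]: "dot3 x (cross3 x y) = 0"
  by (cases x rule: prod_cases3, cases y rule: prod_cases3) (simp add: algebra_simps)
lemma dot_cross_self2[simp]: "dot3 y (cross3 x y) = 0"
  by (cases x rule: prod_cases3, cases y rule: prod_cases3) (simp add: algebra_simps)
lemma dot_cross_self3[simp]: "dot3 (cross3 x y) x = 0"
  by (cases x rule: prod_cases3, cases y rule: prod_cases3) (simp add: algebra_simps)
lemma dot_cross_self4[simp]: "dot3 (cross3 x y) y = 0"
  by (cases x rule: prod_cases3, cases y rule: prod_cases3) (simp add: algebra_simps)
lemma triple_cross: "cross3 (cross3 x y) z = add3 (smult3 (dot3 x z) y) (smult3 (- dot3 y z) x)"
  by (cases x rule: prod_cases3, cases y rule: prod_cases3, cases z rule: prod_cases3) (simp add: algebra_simps)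
lemma binet_cauchy: "dot3 (cross3 x y) (cross3 u v) = dot3 x u * dot3 y v - dot3 x v * dot3 y u"
  by (cases x rule: prod_cases3, cases y rule: prod_cases3, cases u rule: prod_cases3, cases v rule: prod_cases3) (simp add: algebra_simps)
lemma det_cyc: "det3 x y z = dot3 x (cross3 y z)"
  unfolding det3_def by (cases x rule: prod_cases3, cases y rule: prod_cases3, cases z rule: prod_cases3) (simp add: algebra_simps)
lemma det_swap12: "det3 y x z = - det3 x y z"
  unfolding det3_def by (cases x rule: prod_cases3, cases y rule: prod_cases3, cases z rule: prod_cases3) (simp add: algebra_simps)
lemma det_swap23: "det3 x z y = - det3 x y z"
  unfolding det3_def by (cases x rule: prod_cases3, cases y rule: prod_cases3, cases z rule: prod_cases3) (simp add: algebra_simps)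
lemma cramer: "smult3 (det3 u v w) x = add3 (add3 (smult3 (det3 x v w) u) (smult3 (det3 u x w) v)) (smult3 (det3 u v x) w)"
  unfolding det3_def by (cases x rule: prod_cases3, cases u rule: prod_cases3, cases v rule: prod_cases3, cases w rule: prod_cases3) (simp add: algebra_simps)
lemma cross_cross_common: "cross3 (cross3 z a) (cross3 z b) = smult3 (det3 z a b) z"
  unfolding det3_def by (cases z rule: prod_cases3, cases a rule: prod_cases3, cases b rule: prod_cases3) (simp add: algebra_simps)


lemma smult3_zero[simp]: "smult3 0 v = (0,0,0)" by (cases v rule: prod_cases3) simp
lemma smult3_zero_vec[simp]: "smult3 k (0,0,0) = (0,0,0)" by simp
lemma add3_zero_left[simp]: "add3 (0,0,0) v = v" by (cases v rule: prod_cases3) simp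
lemma add3_zero_right[simp]: "add3 v (0,0,0) = v" by (cases v rule: prod_cases3) simp

lemma orth: assumes "dot3 x r = 0" "dot3 y r = 0" "cross3 x y \<noteq> (0,0,0)"
  shows "\<exists>k. r = smult3 k (cross3 x y)"
proof -
  have "cross3 (cross3 x y) r = (0,0,0)" using assms by (simp add: triple_cross)
  thus ?thesis using par_lemma assms(3) by blast
qed

definition lc :: "'a::field \<Rightarrow> 'a vec3 \<Rightarrow> 'a \<Rightarrow> 'a vec3 \<Rightarrow> 'a vec3" where
  "lc a u b v = add3 (smult3 a u) (smult3 b v)"

lemma cross_lc_lc: "cross3 (lc a u b v) (lc c u d v) = smult3 (a*d - b*c) (cross3 u v)"
  unfolding lc_def by (cases u rule: prod_cases3, cases v rule: prod_cases3) (simp add: algebra_simps)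
lemma cross_lc_left: "cross3 (lc a u b v) w = lc a (cross3 u w) b (cross3 v w)"
  unfolding lc_def by (cases u rule: prod_cases3, cases v rule: prod_cases3, cases w rule: prod_cases3) (simp add: algebra_simps)
lemma cross_lc_right: "cross3 w (lc a u b v) = lc a (cross3 w u) b (cross3 w v)"
  unfolding lc_def by (cases u rule: prod_cases3, cases v rule: prod_cases3, cases w rule: prod_cases3) (simp add: algebra_simps)
lemma dot_lc_left: "dot3 (lc a u b v) w = a * dot3 u w + b * dot3 v w"
  unfolding lc_def by (cases u rule: prod_cases3, cases v rule: prod_cases3, cases w rule: prod_cases3) (simp add: algebra_simps)
lemma dot_lc_right: "dot3 w (lc a u b v) = a * dot3 w u + b * dot3 w v"
  unfolding lc_def by (cases u rule: prod_cases3, cases v rule: prod_cases3, cases w rule: prod_cases3) (simp add: algebra_simps)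
lemma lc_10[simp]: "lc 1 u 0 v = u" "lc 0 u 1 v = v" unfolding lc_def by simp_all
lemma smult_lc: "smult3 k (lc a u b v) = lc (k*a) u (k*b) v"
  unfolding lc_def by (cases u rule: prod_cases3, cases v rule: prod_cases3) (simp add: algebra_simps)

lemma cross_lc_v: "cross3 (lc a u b v) v = smult3 a (cross3 u v)"
  unfolding lc_def by (cases u rule: prod_cases3, cases v rule: prod_cases3) (simp add: algebra_simps)
lemma cross_u_lc: "cross3 u (lc a u b v) = smult3 b (cross3 u v)"
  unfolding lc_def by (cases u rule: prod_cases3, cases v rule: prod_cases3) (simp add: algebra_simps)

lemma lc_inj: assumes "cross3 u v \<noteq> (0,0,0)" "lc a u b v = lc c u d v" shows "a = c \<and> b = d"
proof -
  have "cross3 (lc a u b v) v = cross3 (lc c u d v) v" using assms by simp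
  hence "smult3 a (cross3 u v) = smult3 c (cross3 u v)" by (simp add: cross_lc_v)
  hence "smult3 (a - c) (cross3 u v) = (0,0,0)"
    by (cases "cross3 u v" rule: prod_cases3) (simp add: algebra_simps)
  hence 1: "a = c" using assms(1) by (simp add: smult3_zero_iff)
  have "cross3 u (lc a u b v) = cross3 u (lc c u d v)" using assms by simp
  hence "smult3 b (cross3 u v) = smult3 d (cross3 u v)" by (simp add: cross_u_lc)
  hence "smult3 (b - d) (cross3 u v) = (0,0,0)"
    by (cases "cross3 u v" rule: prod_cases3) (simp add: algebra_simps)
  hence "b = d" using assms(1) by (simp add: smult3_zero_iff)
  with 1 show ?thesis by simp
qed

lemma lc_nz: assumes "cross3 u v \<noteq> (0,0,0)" "(a,b) \<noteq> (0,0)" shows "lc a u b v \<noteq> (0,0,0)"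
proof
  assume "lc a u b v = (0,0,0)"
  hence "lc a u b v = lc 0 u 0 v" by (simp add: lc_def)
  with lc_inj[OF assms(1)] assms(2) show False by blast
qed

lemma nz_of_cross1: "cross3 u v \<noteq> (0,0,0) \<Longrightarrow> u \<noteq> (0,0,0)" by auto
lemma nz_of_cross2: "cross3 u v \<noteq> (0,0,0) \<Longrightarrow> v \<noteq> (0,0,0)" by auto

lemma pt_lc_eq: assumes "cross3 u v \<noteq> (0,0,0)" "(a,b) \<noteq> (0,0)" "(c,d) \<noteq> (0,0)"
  shows "pt (lc a u b v) = pt (lc c u d v) \<longleftrightarrow> a*d - b*c = 0"
  using pt_eq_iff[OF lc_nz[OF assms(1,2)] lc_nz[OF assms(1,3)]] assms(1)
  by (simp add: cross_lc_lc smult3_zero_iff)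

lemma exists_nonorth: assumes "c \<noteq> (0,0,0)" shows "\<exists>w. w \<noteq> (0,0,0) \<and> dot3 c w \<noteq> 0"
proof -
  obtain c1 c2 c3 where c: "c = (c1,c2,c3)" by (cases c rule: prod_cases3)
  show ?thesis
  proof (cases "c1 = 0")
    case False thus ?thesis by (intro exI[of _ "(1,0,0)"]) (simp add: c)
  next
    case True note t = this
    show ?thesis
    proof (cases "c2 = 0")
      case False thus ?thesis by (intro exI[of _ "(0,1,0)"]) (simp add: c)
    next
      case True thus ?thesis using t assms by (intro exI[of _ "(0,0,1)"]) (simp add: c)
    qed
  qed
qed

lemma span: assumes "cross3 u v \<noteq> (0,0,0)" "det3 u v y = 0" shows "\<exists>a b. y = lc a u b v"
proof -
  obtain w where w: "dot3 (cross3 u v) w \<noteq> 0" using exists_nonorth[OF assms(1)] by blast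
  define D where "D = det3 u v w"
  have D: "D \<noteq> 0" using w by (simp add: D_def det3_def)
  have "smult3 D y = lc (det3 y v w) u (det3 u y w) v"
    using cramer[of u v w y] assms(2) by (simp add: D_def lc_def)
  hence "smult3 (1/D) (smult3 D y) = lc (det3 y v w / D) u (det3 u y w / D) v"
    by (simp add: smult_lc)
  hence "y = lc (det3 y v w / D) u (det3 u y w / D) v" using D by simp
  thus ?thesis by blast
qed

lemma join_pt: assumes "cross3 x y \<noteq> (0,0,0)" shows "join (pt x) (pt y) = pt (cross3 x y)"
proof -
  have x: "x \<noteq> (0,0,0)" and y: "y \<noteq> (0,0,0)" using assms by auto
  show ?thesis unfolding join_def
  proof (rule the_equality)
    show "incid (pt x) (pt (cross3 x y)) \<and> incid (pt y) (pt (cross3 x y))"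
      by (simp add: incid_pt[OF x assms] incid_pt[OF y assms])
  next
    fix l assume l: "incid (pt x) l \<and> incid (pt y) l"
    have "incid (pt x) (pt (rep l))" "incid (pt y) (pt (rep l))" using l by simp_all
    hence "dot3 x (rep l) = 0" "dot3 y (rep l) = 0" using incid_pt x y rep_nz by blast+
    then obtain k where k: "rep l = smult3 k (cross3 x y)" using orth assms by blast
    hence "k \<noteq> 0" using rep_nz[of l] by auto
    hence "pt (rep l) = pt (cross3 x y)" using k pt_smult by metis
    thus "l = pt (cross3 x y)" by simp
  qed
qed

lemma meet_pt: "cross3 x y \<noteq> (0,0,0) \<Longrightarrow> meet (pt x) (pt y) = pt (cross3 x y)"
  by (simp add: meet_eq_join join_pt)

lemma incid_rep: "incid P l \<longleftrightarrow> dot3 (rep P) (rep l) = 0" by (simp add: incid_def)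

lemma neq_cross: "X \<noteq> Y \<Longrightarrow> cross3 (rep X) (rep Y) \<noteq> (0,0,0)"
  using pt_eq_iff[of "rep X" "rep Y"] by auto

lemma join_rep: "X \<noteq> Y \<Longrightarrow> join X Y = pt (cross3 (rep X) (rep Y))"
  using join_pt[OF neq_cross] by (metis pt_rep)

lemma join_unique: assumes "X \<noteq> Y" "incid X l" "incid Y l" shows "l = join X Y"
proof -
  have "dot3 (rep X) (rep l) = 0" "dot3 (rep Y) (rep l) = 0" using assms by (simp_all add: incid_def)
  then obtain k where k: "rep l = smult3 k (cross3 (rep X) (rep Y))" using orth neq_cross[OF assms(1)] by blast
  hence "k \<noteq> 0" using rep_nz[of l] by auto
  hence "pt (rep l) = pt (cross3 (rep X) (rep Y))" using k pt_smult by metis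
  thus ?thesis using join_rep[OF assms(1)] by simp
qed

lemma incid_join: assumes "X \<noteq> Y" shows "incid X (join X Y)" "incid Y (join X Y)"
proof -
  have c: "cross3 (rep X) (rep Y) \<noteq> (0,0,0)" using neq_cross[OF assms] .
  show "incid X (join X Y)" using join_rep[OF assms] incid_pt[OF rep_nz c] by (metis dot_cross_self1 pt_rep)
  show "incid Y (join X Y)" using join_rep[OF assms] incid_pt[OF rep_nz c] by (metis dot_cross_self2 pt_rep)
qed

lemma meet_unique: assumes "l \<noteq> m" "incid P l" "incid P m" shows "P = meet l m"
  using join_unique[OF assms(1)] assms(2,3) by (simp add: incid_sym meet_eq_join)

lemma incid_meet: assumes "l \<noteq> m" shows "incid (meet l m) l" "incid (meet l m) m"
  using incid_join[OF assms] by (simp_all add: incid_sym meet_eq_join)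


lemma rep_pt_ex: "v \<noteq> (0,0,0) \<Longrightarrow> \<exists>k. k \<noteq> 0 \<and> rep (pt v) = smult3 k v" by (rule rep_pt)

lemma smult_lc_vec: "smult3 k (lc a u b v) = lc (k*a) u (k*b) v" by (rule smult_lc)

lemma lc_smults: "lc a (smult3 k u) b (smult3 l v) = lc (a*k) u (b*l) v"
  unfolding lc_def by (cases u rule: prod_cases3, cases v rule: prod_cases3) (simp add: algebra_simps)

lemma cross_smults: "cross3 (smult3 k u) (smult3 l v) = smult3 (k*l) (cross3 u v)"
  by (simp add: cross_smult_left cross_smult_right mult.commute)

lemma cr_formula:
  assumes uv: "cross3 u v \<noteq> (0,0,0)" and ab: "(al,be) \<noteq> (0,0)" and cd: "(ga,de) \<noteq> (0,0)"
  shows "cross_ratio (pt u) (pt v) (pt (lc al u be v)) (pt (lc ga u de v)) = be*ga/(al*de)"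
proof -
  have u: "u \<noteq> (0,0,0)" and v: "v \<noteq> (0,0,0)" using uv by auto
  obtain k1 where k1: "k1 \<noteq> 0" "rep (pt u) = smult3 k1 u" using rep_pt[OF u] by blast
  obtain k2 where k2: "k2 \<noteq> 0" "rep (pt v) = smult3 k2 v" using rep_pt[OF v] by blast
  obtain k3 where k3: "k3 \<noteq> 0" "rep (pt (lc al u be v)) = smult3 k3 (lc al u be v)" using rep_pt[OF lc_nz[OF uv ab]] by blast
  obtain k4 where k4: "k4 \<noteq> 0" "rep (pt (lc ga u de v)) = smult3 k4 (lc ga u de v)" using rep_pt[OF lc_nz[OF uv cd]] by blast
  have key: "\<And>a b. lc a (rep (pt u)) b (rep (pt v)) = lc (a*k1) u (b*k2) v"
    using k1 k2 by (simp add: lc_smults)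
  show ?thesis unfolding cross_ratio_def
  proof (rule the_equality)
    show "\<exists>a b c d. rep (pt (lc al u be v)) = add3 (smult3 a (rep (pt u))) (smult3 b (rep (pt v))) \<and>
      rep (pt (lc ga u de v)) = add3 (smult3 c (rep (pt u))) (smult3 d (rep (pt v))) \<and>
      be * ga / (al * de) = b * c / (a * d)"
    proof (intro exI conjI)
      show "rep (pt (lc al u be v)) = add3 (smult3 (k3*al/k1) (rep (pt u))) (smult3 (k3*be/k2) (rep (pt v)))"
        using key[of "k3*al/k1" "k3*be/k2"] k1 k2 k3 by (simp add: lc_def[symmetric] smult_lc)
      show "rep (pt (lc ga u de v)) = add3 (smult3 (k4*ga/k1) (rep (pt u))) (smult3 (k4*de/k2) (rep (pt v)))"
        using key[of "k4*ga/k1" "k4*de/k2"] k1 k2 k4 by (simp add: lc_def[symmetric] smult_lc)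
      show "be * ga / (al * de) = k3 * be / k2 * (k4 * ga / k1) / (k3 * al / k1 * (k4 * de / k2))"
      proof (cases "al * de = 0")
        case True thus ?thesis by auto
      next
        case False thus ?thesis using k1 k2 k3 k4 by (simp add: field_simps)
      qed
    qed
  next
    fix r assume "\<exists>a b c d. rep (pt (lc al u be v)) = add3 (smult3 a (rep (pt u))) (smult3 b (rep (pt v))) \<and>
      rep (pt (lc ga u de v)) = add3 (smult3 c (rep (pt u))) (smult3 d (rep (pt v))) \<and>
      r = b * c / (a * d)"
    then obtain a b c d where e1: "rep (pt (lc al u be v)) = lc a (rep (pt u)) b (rep (pt v))"
      and e2: "rep (pt (lc ga u de v)) = lc c (rep (pt u)) d (rep (pt v))" and r: "r = b * c / (a * d)"
      unfolding lc_def by blast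
    have "lc (k3*al) u (k3*be) v = lc (a*k1) u (b*k2) v" using e1 k3 key by (simp add: smult_lc)
    hence ab': "k3*al = a*k1" "k3*be = b*k2" using lc_inj[OF uv] by blast+
    have "lc (k4*ga) u (k4*de) v = lc (c*k1) u (d*k2) v" using e2 k4 key by (simp add: smult_lc)
    hence cd': "k4*ga = c*k1" "k4*de = d*k2" using lc_inj[OF uv] by blast+
    have a: "a = k3*al/k1" and b: "b = k3*be/k2" and c: "c = k4*ga/k1" and d: "d = k4*de/k2"
      using ab' cd' k1 k2 by (simp_all add: field_simps)
    show "r = be * ga / (al * de)"
    proof (cases "al * de = 0")
      case True thus ?thesis using r a d by auto
    next
      case False thus ?thesis using k1 k2 k3 k4 r a b c d by (simp add: field_simps)
    qed
  qed
qed

lemma lc_u: "u = lc 1 u 0 v" and lc_v: "v = lc 0 u 1 v" by simp_all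

lemma hs_formula:
  assumes two: "(2::'a::field) \<noteq> 0" and uv: "cross3 u v \<noteq> (0,0,0)" and ab: "(al,be) \<noteq> (0::'a,0)" and cd: "(ga,de) \<noteq> (0,0)"
  shows "harmonic_set (pt u) (pt v) (pt (lc al u be v)) (pt (lc ga u de v)) \<longleftrightarrow> al*de \<noteq> 0 \<and> be*ga = -(al*de)"
proof
  assume "harmonic_set (pt u) (pt v) (pt (lc al u be v)) (pt (lc ga u de v))"
  hence "be*ga/(al*de) = -1" unfolding harmonic_set_def using cr_formula[OF uv ab cd] by simp
  moreover hence "al*de \<noteq> 0" by auto
  ultimately show "al*de \<noteq> 0 \<and> be*ga = -(al*de)" by (simp add: field_simps)
next
  assume h: "al*de \<noteq> 0 \<and> be*ga = -(al*de)"
  have nz10: "(1::'a,0::'a) \<noteq> (0,0)" and nz01: "(0::'a,1::'a) \<noteq> (0,0)" by simp_all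
  have ne: "\<And>a b c d. (a,b) \<noteq> (0::'a,0) \<Longrightarrow> (c,d) \<noteq> (0,0) \<Longrightarrow> a*d - b*c \<noteq> 0 \<Longrightarrow> pt (lc a u b v) \<noteq> pt (lc c u d v)"
    using pt_lc_eq[OF uv] by blast
  have bg: "be \<noteq> 0" "ga \<noteq> 0" using h by auto
  have "al*de - be*ga = 2*(al*de)" using h by simp
  hence "al*de - be*ga \<noteq> 0" using h two by simp
  hence d: "distinct [pt u, pt v, pt (lc al u be v), pt (lc ga u de v)]"
    using ne[OF nz10 nz01] ne[OF nz10 ab] ne[OF nz10 cd] ne[OF nz01 ab] ne[OF nz01 cd] ne[OF ab cd] h bg
    by (simp add: lc_u[symmetric] lc_v[symmetric])
  have c: "collinear4 (pt u) (pt v) (pt (lc al u be v)) (pt (lc ga u de v))"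
    unfolding collinear4_def
    by (rule exI[of _ "pt (cross3 u v)"])
       (simp add: incid_pt uv lc_nz[OF uv ab] lc_nz[OF uv cd] nz_of_cross1[OF uv] nz_of_cross2[OF uv] dot_lc_left)
  show "harmonic_set (pt u) (pt v) (pt (lc al u be v)) (pt (lc ga u de v))"
    unfolding harmonic_set_def using d c cr_formula[OF uv ab cd] h by (simp add: field_simps)
qed


lemma cross_pn_qn: "cross3 (cross3 p n) (cross3 q n) = smult3 (dot3 (cross3 p q) n) n"
  by (cases p rule: prod_cases3, cases q rule: prod_cases3, cases n rule: prod_cases3) (simp add: algebra_simps)

lemma hp_formula:
  assumes two: "(2::'a::field) \<noteq> 0" and pq: "cross3 p q \<noteq> (0,0,0)" and ab: "(al,be) \<noteq> (0::'a,0)" and cd: "(ga,de) \<noteq> (0,0)"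
  shows "harmonic_pencil (pt p) (pt q) (pt (lc al p be q)) (pt (lc ga p de q)) \<longleftrightarrow> al*de \<noteq> 0 \<and> be*ga = -(al*de)"
proof
  assume "harmonic_pencil (pt p) (pt q) (pt (lc al p be q)) (pt (lc ga p de q))"
  then obtain Z m where d: "distinct [pt p, pt q, pt (lc al p be q), pt (lc ga p de q)]"
    and Z: "incid Z (pt p)" "incid Z (pt q)" and m: "\<not> incid Z m"
    and hs: "harmonic_set (meet (pt p) m) (meet (pt q) m) (meet (pt (lc al p be q)) m) (meet (pt (lc ga p de q)) m)"
    unfolding harmonic_pencil_def by blast
  have "pt p \<noteq> pt q" using d by simp
  hence "Z = meet (pt p) (pt q)" using meet_unique Z by blast
  hence Zp: "Z = pt (cross3 p q)" using meet_pt[OF pq] by simp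
  define n where "n = rep m"
  have mn: "m = pt n" by (simp add: n_def)
  have nnz: "n \<noteq> (0,0,0)" by (simp add: n_def)
  have dn: "dot3 (cross3 p q) n \<noteq> 0" using m Zp mn incid_pt[OF pq nnz] by simp
  have cc: "cross3 (cross3 p n) (cross3 q n) \<noteq> (0,0,0)"
    using cross_pn_qn[of p n q] dn nnz by (simp add: smult3_zero_iff)
  hence pn: "cross3 p n \<noteq> (0,0,0)" and qn: "cross3 q n \<noteq> (0,0,0)" by auto
  have l1: "cross3 (lc al p be q) n \<noteq> (0,0,0)" using lc_nz[OF cc ab] by (simp add: cross_lc_left)
  have l2: "cross3 (lc ga p de q) n \<noteq> (0,0,0)" using lc_nz[OF cc cd] by (simp add: cross_lc_left)
  have "harmonic_set (pt (cross3 p n)) (pt (cross3 q n)) (pt (lc al (cross3 p n) be (cross3 q n))) (pt (lc ga (cross3 p n) de (cross3 q n)))"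
    using hs unfolding mn meet_pt[OF pn] meet_pt[OF qn] meet_pt[OF l1] meet_pt[OF l2] by (simp add: cross_lc_left)
  thus "al*de \<noteq> 0 \<and> be*ga = -(al*de)" using hs_formula[OF two cc ab cd] by simp
next
  assume h: "al*de \<noteq> 0 \<and> be*ga = -(al*de)"
  have nz10: "(1::'a,0::'a) \<noteq> (0,0)" and nz01: "(0::'a,1::'a) \<noteq> (0,0)" by simp_all
  have ne: "\<And>a b c d. (a,b) \<noteq> (0::'a,0) \<Longrightarrow> (c,d) \<noteq> (0,0) \<Longrightarrow> a*d - b*c \<noteq> 0 \<Longrightarrow> pt (lc a p b q) \<noteq> pt (lc c p d q)"
    using pt_lc_eq[OF pq] by blast
  have bg: "be \<noteq> 0" "ga \<noteq> 0" using h by auto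
  have "al*de - be*ga = 2*(al*de)" using h by simp
  hence "al*de - be*ga \<noteq> 0" using h two by simp
  hence d: "distinct [pt p, pt q, pt (lc al p be q), pt (lc ga p de q)]"
    using ne[OF nz10 nz01] ne[OF nz10 ab] ne[OF nz10 cd] ne[OF nz01 ab] ne[OF nz01 cd] ne[OF ab cd] h bg
    by (simp add: lc_u[symmetric] lc_v[symmetric])
  obtain n where n: "n \<noteq> (0,0,0)" "dot3 (cross3 p q) n \<noteq> 0" using exists_nonorth[OF pq] by blast
  have cc: "cross3 (cross3 p n) (cross3 q n) \<noteq> (0,0,0)"
    using cross_pn_qn[of p n q] n by (simp add: smult3_zero_iff)
  hence pn: "cross3 p n \<noteq> (0,0,0)" and qn: "cross3 q n \<noteq> (0,0,0)" by auto
  have l1: "cross3 (lc al p be q) n \<noteq> (0,0,0)" using lc_nz[OF cc ab] by (simp add: cross_lc_left)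
  have l2: "cross3 (lc ga p de q) n \<noteq> (0,0,0)" using lc_nz[OF cc cd] by (simp add: cross_lc_left)
  have hs: "harmonic_set (pt (cross3 p n)) (pt (cross3 q n)) (pt (lc al (cross3 p n) be (cross3 q n))) (pt (lc ga (cross3 p n) de (cross3 q n)))"
    using hs_formula[OF two cc ab cd] h by simp
  have p: "p \<noteq> (0,0,0)" and q: "q \<noteq> (0,0,0)" using pq by auto
  have inc: "incid (pt (cross3 p q)) (pt p)" "incid (pt (cross3 p q)) (pt q)"
     "incid (pt (cross3 p q)) (pt (lc al p be q))" "incid (pt (cross3 p q)) (pt (lc ga p de q))"
    "\<not> incid (pt (cross3 p q)) (pt n)"
    using n by (simp_all add: incid_pt pq p q lc_nz[OF pq ab] lc_nz[OF pq cd] dot_lc_right)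
  show "harmonic_pencil (pt p) (pt q) (pt (lc al p be q)) (pt (lc ga p de q))"
    unfolding harmonic_pencil_def
  proof (intro conjI exI)
    show "distinct [pt p, pt q, pt (lc al p be q), pt (lc ga p de q)]" by (rule d)
    show "harmonic_set (meet (pt p) (pt n)) (meet (pt q) (pt n)) (meet (pt (lc al p be q)) (pt n)) (meet (pt (lc ga p de q)) (pt n))"
      using hs unfolding meet_pt[OF pn] meet_pt[OF qn] meet_pt[OF l1] meet_pt[OF l2] by (simp add: cross_lc_left)
  qed (use inc in auto)
qed


lemma det_add1: "det3 (add3 x y) v w = det3 x v w + det3 y v w"
  unfolding det3_def by (cases x rule: prod_cases3, cases y rule: prod_cases3, cases v rule: prod_cases3, cases w rule: prod_cases3) (simp add: algebra_simps)
lemma det_add2: "det3 u (add3 x y) w = det3 u x w + det3 u y w"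
  unfolding det3_def by (cases x rule: prod_cases3, cases y rule: prod_cases3, cases u rule: prod_cases3, cases w rule: prod_cases3) (simp add: algebra_simps)
lemma det_add3: "det3 u v (add3 x y) = det3 u v x + det3 u v y"
  unfolding det3_def by (cases x rule: prod_cases3, cases y rule: prod_cases3, cases v rule: prod_cases3, cases u rule: prod_cases3) (simp add: algebra_simps)
lemma det_smult1: "det3 (smult3 k x) v w = k * det3 x v w"
  unfolding det3_def by (cases x rule: prod_cases3, cases v rule: prod_cases3, cases w rule: prod_cases3) (simp add: algebra_simps)
lemma det_smult2: "det3 u (smult3 k x) w = k * det3 u x w"
  unfolding det3_def by (cases x rule: prod_cases3, cases u rule: prod_cases3, cases w rule: prod_cases3) (simp add: algebra_simps)
lemma det_smult3: "det3 u v (smult3 k x) = k * det3 u v x"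
  unfolding det3_def by (cases x rule: prod_cases3, cases v rule: prod_cases3, cases u rule: prod_cases3) (simp add: algebra_simps)
lemma det_rep12[simp]: "det3 x x w = 0" unfolding det3_def by simp
lemma det_rep13[simp]: "det3 x v x = 0" unfolding det3_def by simp
lemma det_rep23[simp]: "det3 u x x = 0" unfolding det3_def by simp
lemma det_cyc2: "det3 z a b = det3 a b z"
  unfolding det3_def by (cases z rule: prod_cases3, cases a rule: prod_cases3, cases b rule: prod_cases3) (simp add: algebra_simps)

lemmas det_lin = det_add1 det_add2 det_add3 det_smult1 det_smult2 det_smult3

lemma exists_orth: assumes "x \<noteq> (0,0,0)" shows "\<exists>r. r \<noteq> (0,0,0) \<and> dot3 x r = 0"
proof -
  obtain x1 x2 x3 where x: "x = (x1,x2,x3)" by (cases x rule: prod_cases3)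
  show ?thesis
  proof (cases "x1 = 0 \<and> x2 = 0")
    case True thus ?thesis by (intro exI[of _ "(1,0,0)"]) (simp add: x)
  next
    case False thus ?thesis by (intro exI[of _ "(-x2,x1,0)"]) (auto simp: x algebra_simps)
  qed
qed

lemma col_of_det: assumes x: "x \<noteq> (0,0,0)" and y: "y \<noteq> (0,0,0)" and z: "z \<noteq> (0,0,0)" and d: "det3 x y z = 0"
  shows "collinear3 (pt x) (pt y) (pt z)"
proof (cases "cross3 x y = (0,0,0)")
  case False
  show ?thesis unfolding collinear3_def
    by (rule exI[of _ "pt (cross3 x y)"]) (use d in \<open>simp add: incid_pt x y z False det3_def dot3_comm\<close>)
next
  case True
  then obtain k where k: "y = smult3 k x" using par_lemma x by blast
  show ?thesis
  proof (cases "cross3 x z = (0,0,0)")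
    case False
    have yz: "dot3 y (cross3 x z) = 0" by (simp add: k dot3_smult_left)
    show ?thesis unfolding collinear3_def
      by (rule exI[of _ "pt (cross3 x z)"]) (simp add: incid_pt x y z False yz)
  next
    case True
    then obtain k' where k': "z = smult3 k' x" using par_lemma x by blast
    obtain r where r: "r \<noteq> (0,0,0)" "dot3 x r = 0" using exists_orth[OF x] by blast
    have yr: "dot3 y r = 0" "dot3 z r = 0" by (simp_all add: k k' dot3_smult_left r)
    show ?thesis unfolding collinear3_def
      by (rule exI[of _ "pt r"]) (simp add: incid_pt x y z r yr)
  qed
qed

lemma det_nz_of_noncol: assumes "\<not> collinear3 X Y Z" shows "det3 (rep X) (rep Y) (rep Z) \<noteq> 0"
  using col_of_det[of "rep X" "rep Y" "rep Z"] assms by auto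

lemma collinear3_perm: "collinear3 X Y Z \<Longrightarrow> collinear3 Y X Z" "collinear3 X Y Z \<Longrightarrow> collinear3 X Z Y"
  unfolding collinear3_def by blast+

lemma normalize:
  assumes gp: "general_position A C B D"
  shows "\<exists>a b c. det3 a b c \<noteq> 0 \<and> A = pt a \<and> B = pt b \<and> C = pt c \<and> D = pt (add3 (add3 a b) c)"
proof -
  define a0 where "a0 = rep A"
  define b0 where "b0 = rep B"
  define c0 where "c0 = rep C"
  define d0 where "d0 = rep D"
  have g: "\<not> collinear3 A C B" "\<not> collinear3 A C D" "\<not> collinear3 A B D" "\<not> collinear3 C B D"
    using gp unfolding general_position_def by auto
  have D0: "det3 a0 b0 c0 \<noteq> 0" unfolding a0_def b0_def c0_def
    by (rule det_nz_of_noncol) (use g(1) collinear3_perm in blast)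
  have d1: "det3 d0 b0 c0 \<noteq> 0" unfolding d0_def b0_def c0_def
    by (rule det_nz_of_noncol) (use g(4) collinear3_perm in blast)
  have d2: "det3 a0 d0 c0 \<noteq> 0" unfolding a0_def d0_def c0_def
    by (rule det_nz_of_noncol) (use g(2) collinear3_perm in blast)
  have d3: "det3 a0 b0 d0 \<noteq> 0" unfolding a0_def b0_def d0_def
    by (rule det_nz_of_noncol) (use g(3) collinear3_perm in blast)
  define D0 where "D0 = det3 a0 b0 c0"
  define a where "a = smult3 (det3 d0 b0 c0 / D0) a0"
  define b where "b = smult3 (det3 a0 d0 c0 / D0) b0"
  define c where "c = smult3 (det3 a0 b0 d0 / D0) c0"
  have "smult3 D0 d0 = add3 (add3 (smult3 (det3 d0 b0 c0) a0) (smult3 (det3 a0 d0 c0) b0)) (smult3 (det3 a0 b0 d0) c0)"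
    unfolding D0_def by (rule cramer)
  hence "smult3 (1/D0) (smult3 D0 d0) = smult3 (1/D0) (add3 (add3 (smult3 (det3 d0 b0 c0) a0) (smult3 (det3 a0 d0 c0) b0)) (smult3 (det3 a0 b0 d0) c0))"
    by simp
  hence dd: "d0 = add3 (add3 a b) c" using D0
    unfolding a_def b_def c_def D0_def
    by (cases a0 rule: prod_cases3, cases b0 rule: prod_cases3, cases c0 rule: prod_cases3, cases d0 rule: prod_cases3)
       (simp add: field_simps)
  have "det3 a b c = (det3 d0 b0 c0 / D0) * (det3 a0 d0 c0 / D0) * (det3 a0 b0 d0 / D0) * D0"
    unfolding a_def b_def c_def D0_def by (simp add: det_lin)
  hence "det3 a b c \<noteq> 0" using D0 d1 d2 d3 unfolding D0_def by simp
  moreover have "A = pt a" unfolding a_def using pt_smult[of _ a0] d1 D0 by (simp add: a0_def D0_def)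
  moreover have "B = pt b" unfolding b_def using pt_smult[of _ b0] d2 D0 by (simp add: b0_def D0_def)
  moreover have "C = pt c" unfolding c_def using pt_smult[of _ c0] d3 D0 by (simp add: c0_def D0_def)
  moreover have "D = pt (add3 (add3 a b) c)" by (metis dd d0_def pt_rep)
  ultimately show ?thesis by blast
qed


definition hq :: "'a::field vec3 \<Rightarrow> 'a vec3 \<Rightarrow> 'a vec3 \<Rightarrow> 'a vec3 \<Rightarrow> 'a" where
  "hq a b c z = 2 * det3 z b c * det3 a z c - det3 a b z * det3 z b c - det3 a b z * det3 a z c"

lemma hq_smult: "hq a b c (smult3 k z) = k^2 * hq a b c z"
  unfolding hq_def by (simp add: det_lin power2_eq_square algebra_simps)

lemma solve3: "add3 (add3 (smult3 al u) (smult3 be v)) w = (0,0,0) \<Longrightarrow> w = lc (-al) u (-be) v"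
  unfolding lc_def
  by (cases u rule: prod_cases3, cases v rule: prod_cases3, cases w rule: prod_cases3) (auto simp: algebra_simps eq_neg_iff_add_eq_0)

lemma comb3: "smult3 k w = lc al p be q \<Longrightarrow> smult3 k (add3 (add3 p q) w) = lc (k+al) p (k+be) q"
  unfolding lc_def
  by (cases p rule: prod_cases3, cases q rule: prod_cases3, cases w rule: prod_cases3) (auto simp: algebra_simps)

lemma pt_of_eq: assumes "smult3 D z = v" "D \<noteq> 0" "z \<noteq> (0,0,0)" shows "pt z = pt v"
  using pt_smult[OF assms(2), of z] assms(1) by simp

lemma hc_char:
  assumes two: "(2::'a::field) \<noteq> 0" and Dnz: "det3 a b c \<noteq> (0::'a)"
  shows "Z \<in> hcurve (pt a) (pt c) (pt b) (pt (add3 (add3 a b) c)) \<longleftrightarrow> hq a b c (rep Z) = 0"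
proof -
  define d where "d = add3 (add3 a b) c"
  define z where "z = rep Z"
  define D where "D = det3 a b c"
  define k1 where "k1 = det3 z b c"
  define k2 where "k2 = det3 a z c"
  define k3 where "k3 = det3 a b z"
  have DD: "D \<noteq> 0" using Dnz by (simp add: D_def)
  have anz: "a \<noteq> (0,0,0)" and bnz: "b \<noteq> (0,0,0)" and cnz: "c \<noteq> (0,0,0)"
    using Dnz by (auto simp: det3_def)
  have "det3 a b d = D" by (simp add: d_def D_def det_lin)
  hence dnz: "d \<noteq> (0,0,0)" using DD by (auto simp: det3_def)
  have znz: "z \<noteq> (0,0,0)" by (simp add: z_def)
  have Zz: "Z = pt z" by (simp add: z_def)
  have cr: "smult3 D z = add3 (add3 (smult3 k1 a) (smult3 k2 b)) (smult3 k3 c)"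
    unfolding D_def k1_def k2_def k3_def by (rule cramer)
  have Dz: "smult3 D z \<noteq> (0,0,0)" using DD znz by (simp add: smult3_zero_iff)
  have i1: "Z = pt a" if "k2 = 0" "k3 = 0"
  proof -
    have e: "smult3 D z = smult3 k1 a" using cr that by simp
    hence "k1 \<noteq> 0" using Dz by auto
    thus ?thesis using pt_of_eq[OF e DD znz] Zz pt_smult by metis
  qed
  have i2: "Z = pt b" if "k1 = 0" "k3 = 0"
  proof -
    have e: "smult3 D z = smult3 k2 b" using cr that by simp
    hence "k2 \<noteq> 0" using Dz by auto
    thus ?thesis using pt_of_eq[OF e DD znz] Zz pt_smult by metis
  qed
  have i3: "Z = pt c" if "k1 = 0" "k2 = 0"
  proof -
    have e: "smult3 D z = smult3 k3 c" using cr that by simp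
    hence "k3 \<noteq> 0" using Dz by auto
    thus ?thesis using pt_of_eq[OF e DD znz] Zz pt_smult by metis
  qed
  have i4: "Z = pt d" if "k2 = k1" "k3 = k1"
  proof -
    have e: "smult3 D z = smult3 k1 d" using cr that unfolding d_def
      by (cases a rule: prod_cases3, cases b rule: prod_cases3, cases c rule: prod_cases3) (simp add: algebra_simps)
    hence "k1 \<noteq> 0" using Dz by auto
    thus ?thesis using pt_of_eq[OF e DD znz] Zz pt_smult by metis
  qed
  have hqz: "hq a b c z = 2*k1*k2 - k3*k1 - k3*k2" unfolding hq_def k1_def k2_def k3_def by simp
  have vert: "hq a b c (rep P) = 0" if "P \<in> {pt a, pt c, pt b, pt d}" for P
  proof -
    have "\<exists>v k. v \<in> {a,b,c,d} \<and> v \<noteq> (0,0,0) \<and> rep P = smult3 k v"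
      using that rep_pt anz bnz cnz dnz by blast
    then obtain v k where v: "v \<in> {a,b,c,d}" "rep P = smult3 k v" by blast
    have "hq a b c v = 0" using v(1) unfolding hq_def d_def by (auto simp: det_lin)
    thus ?thesis using v(2) by (simp add: hq_smult)
  qed
  show ?thesis
  proof (cases "Z \<in> {pt a, pt c, pt b, pt d}")
    case True
    thus ?thesis using vert[OF True] unfolding hcurve_def d_def[symmetric] z_def by auto
  next
    case False
    hence nv: "Z \<noteq> pt a" "Z \<noteq> pt b" "Z \<noteq> pt c" "Z \<noteq> pt d" by auto
    have za: "cross3 z a \<noteq> (0,0,0)" using pt_eq_iff[OF znz anz] nv Zz by auto
    have zb: "cross3 z b \<noteq> (0,0,0)" using pt_eq_iff[OF znz bnz] nv Zz by auto
    have zc: "cross3 z c \<noteq> (0,0,0)" using pt_eq_iff[OF znz cnz] nv Zz by auto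
    have zd: "cross3 z d \<noteq> (0,0,0)" using pt_eq_iff[OF znz dnz] nv Zz by auto
    have LHS: "Z \<in> hcurve (pt a) (pt c) (pt b) (pt d) \<longleftrightarrow>
        harmonic_pencil (pt (cross3 z a)) (pt (cross3 z b)) (pt (cross3 z c)) (pt (cross3 z d))"
      using False unfolding hcurve_def Zz
      by (auto simp: join_pt[OF za] join_pt[OF zb] join_pt[OF zc] join_pt[OF zd])
    show ?thesis
    proof (cases "k3 = 0")
      case True
      have "cross3 (cross3 z a) (cross3 z b) = (0,0,0)"
        using True by (simp add: cross_cross_common det_cyc2 k3_def)
      hence "pt (cross3 z a) = pt (cross3 z b)" using pt_eq_iff[OF za zb] by simp
      hence "\<not> harmonic_pencil (pt (cross3 z a)) (pt (cross3 z b)) (pt (cross3 z c)) (pt (cross3 z d))"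
        unfolding harmonic_pencil_def by simp
      moreover have "k1 \<noteq> 0" using i2 True nv by blast
      moreover have "k2 \<noteq> 0" using i1 True nv by blast
      ultimately show ?thesis using LHS hqz True two unfolding z_def d_def by simp
    next
      case False
      define p where "p = cross3 z a"
      define q where "q = cross3 z b"
      have pq: "cross3 p q \<noteq> (0,0,0)"
        unfolding p_def q_def using False znz by (simp add: cross_cross_common det_cyc2 k3_def smult3_zero_iff)
      have "cross3 z (smult3 D z) = (0,0,0)" by (simp add: cross_smult_right)
      hence "add3 (add3 (smult3 k1 p) (smult3 k2 q)) (smult3 k3 (cross3 z c)) = (0,0,0)"
        unfolding cr p_def q_def by (simp add: cross_add_right cross_smult_right)
      hence ec: "smult3 k3 (cross3 z c) = lc (-k1) p (-k2) q" by (rule solve3)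
      have "cross3 z d = add3 (add3 p q) (cross3 z c)" unfolding d_def p_def q_def by (simp add: cross_add_right)
      hence ed: "smult3 k3 (cross3 z d) = lc (k3 + -k1) p (k3 + -k2) q" using comb3[OF ec] by simp
      have n1: "(-k1, -k2) \<noteq> (0,0)" using i3 nv by auto
      have n2: "(k3 + -k1, k3 + -k2) \<noteq> (0,0)" using i4 nv by auto
      have "harmonic_pencil (pt (cross3 z a)) (pt (cross3 z b)) (pt (cross3 z c)) (pt (cross3 z d))
         \<longleftrightarrow> harmonic_pencil (pt p) (pt q) (pt (lc (-k1) p (-k2) q)) (pt (lc (k3 + -k1) p (k3 + -k2) q))"
        using pt_of_eq[OF ec False zc] pt_of_eq[OF ed False zd] by (simp add: p_def q_def)
      also have "\<dots> \<longleftrightarrow> (-k1)*(k3 + -k2) \<noteq> 0 \<and> (-k2)*(k3 + -k1) = -((-k1)*(k3 + -k2))"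
        by (rule hp_formula[OF two pq n1 n2])
      also have "\<dots> \<longleftrightarrow> 2*k1*k2 - k3*k1 - k3*k2 = 0"
      proof
        assume "(-k1)*(k3 + -k2) \<noteq> 0 \<and> (-k2)*(k3 + -k1) = -((-k1)*(k3 + -k2))"
        thus "2*k1*k2 - k3*k1 - k3*k2 = 0" by (simp add: algebra_simps)
      next
        assume h: "2*k1*k2 - k3*k1 - k3*k2 = 0"
        have "k1 \<noteq> 0"
        proof
          assume "k1 = 0"
          hence "k3*k2 = 0" using h by simp
          hence "k2 = 0" using False by simp
          thus False using i3 nv \<open>k1 = 0\<close> by blast
        qed
        moreover have "k3 \<noteq> k2"
        proof
          assume e: "k3 = k2"
          hence "k2 * (k1 - k2) = 0" using h by (simp add: algebra_simps)
          hence "k1 = k2" using False e by simp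
          thus False using i4 nv e by metis
        qed
        ultimately show "(-k1)*(k3 + -k2) \<noteq> 0 \<and> (-k2)*(k3 + -k1) = -((-k1)*(k3 + -k2))"
          using h by (simp add: algebra_simps)
      qed
      finally show ?thesis using LHS hqz unfolding z_def d_def by simp
    qed
  qed
qed


definition symbil :: "('a::field vec3 \<Rightarrow> 'a vec3 \<Rightarrow> 'a) \<Rightarrow> bool" where
  "symbil B \<longleftrightarrow> (\<forall>x y. B x y = B y x) \<and> (\<forall>x y z. B (add3 x y) z = B x z + B y z) \<and>
     (\<forall>k x z. B (smult3 k x) z = k * B x z)"

definition nondeg :: "('a::field vec3 \<Rightarrow> 'a vec3 \<Rightarrow> 'a) \<Rightarrow> bool" where
  "nondeg B \<longleftrightarrow> (\<forall>x. x \<noteq> (0,0,0) \<longrightarrow> (\<exists>y. B x y \<noteq> 0))"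

definition cov :: "('a::field vec3 \<Rightarrow> 'a vec3 \<Rightarrow> 'a) \<Rightarrow> 'a vec3 \<Rightarrow> 'a vec3" where
  "cov B x = (B x (1,0,0), B x (0,1,0), B x (0,0,1))"

lemma symbil_sym: "symbil B \<Longrightarrow> B x y = B y x" unfolding symbil_def by blast
lemma symbil_add1: "symbil B \<Longrightarrow> B (add3 x y) z = B x z + B y z" unfolding symbil_def by blast
lemma symbil_smult1: "symbil B \<Longrightarrow> B (smult3 k x) z = k * B x z" unfolding symbil_def by blast
lemma symbil_add2: "symbil B \<Longrightarrow> B z (add3 x y) = B z x + B z y"
  by (simp add: symbil_sym[of B z] symbil_add1)
lemma symbil_smult2: "symbil B \<Longrightarrow> B z (smult3 k x) = k * B z x"
  by (simp add: symbil_sym[of B z] symbil_smult1)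
lemma symbil_lc1: "symbil B \<Longrightarrow> B (lc a u b v) w = a * B u w + b * B v w"
  by (simp add: lc_def symbil_add1 symbil_smult1)
lemma symbil_lc2: "symbil B \<Longrightarrow> B w (lc a u b v) = a * B w u + b * B w v"
  by (simp add: lc_def symbil_add2 symbil_smult2)

lemma vec_decomp: "(y1,y2,y3) = add3 (add3 (smult3 y1 (1,0,0)) (smult3 y2 (0,1,0))) (smult3 y3 (0::'a::field,0,1))"
  by simp

lemma dot_cov: assumes "symbil B" shows "dot3 y (cov B x) = B x y"
proof -
  obtain y1 y2 y3 where y: "y = (y1,y2,y3)" by (cases y rule: prod_cases3)
  have "B x y = B x (add3 (add3 (smult3 y1 (1,0,0)) (smult3 y2 (0,1,0))) (smult3 y3 (0,0,1)))"
    unfolding y by (subst vec_decomp) simp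
  also have "\<dots> = y1 * B x (1,0,0) + y2 * B x (0,1,0) + y3 * B x (0,0,1)"
    by (simp only: symbil_add2[OF assms] symbil_smult2[OF assms])
  finally show ?thesis by (simp add: y cov_def)
qed

lemma cov_lc: assumes "symbil B" shows "cov B (lc a u b v) = lc a (cov B u) b (cov B v)"
  unfolding cov_def symbil_lc1[OF assms] by (simp add: lc_def)
lemma cov_smult: assumes "symbil B" shows "cov B (smult3 k u) = smult3 k (cov B u)"
  by (simp add: cov_def symbil_smult1[OF assms])

lemma cov_nz: assumes "symbil B" "nondeg B" "x \<noteq> (0,0,0)" shows "cov B x \<noteq> (0,0,0)"
proof
  assume "cov B x = (0,0,0)"
  hence "\<And>y. B x y = 0" using dot_cov[OF assms(1), of _ x] by (metis dot_zero_right)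
  thus False using assms(2,3) unfolding nondeg_def by blast
qed

definition Bh :: "'a::field vec3 \<Rightarrow> 'a vec3 \<Rightarrow> 'a vec3 \<Rightarrow> 'a vec3 \<Rightarrow> 'a vec3 \<Rightarrow> 'a" where
  "Bh a b c x y = 2 * (det3 x b c * det3 a y c + det3 a x c * det3 y b c)
     - (det3 x b c * det3 a b y + det3 a b x * det3 y b c)
     - (det3 a x c * det3 a b y + det3 a b x * det3 a y c)"

lemma Bh_symbil: "symbil (Bh a b c)"
  unfolding symbil_def Bh_def by (simp add: det_lin algebra_simps)

lemma Bh_diag: "Bh a b c x x = 2 * hq a b c x"
  unfolding Bh_def hq_def by (simp add: algebra_simps)

lemma Bh_nondeg: assumes two: "(2::'a::field) \<noteq> 0" and D: "det3 a b c \<noteq> (0::'a)" shows "nondeg (Bh a b c)"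
  unfolding nondeg_def
proof (intro allI impI)
  fix x :: "'a vec3" assume x: "x \<noteq> (0,0,0)"
  show "\<exists>y. Bh a b c x y \<noteq> 0"
  proof (rule ccontr)
    assume "\<not> (\<exists>y. Bh a b c x y \<noteq> 0)"
    hence "\<And>y. Bh a b c x y = 0" by blast
    hence h: "Bh a b c x a = 0" "Bh a b c x b = 0" "Bh a b c x c = 0" by blast+
    define K1 where "K1 = det3 x b c"
    define K2 where "K2 = det3 a x c"
    define K3 where "K3 = det3 a b x"
    define Dl where "Dl = det3 a b c"
    have e1: "(2*K2 - K3) * Dl = 0" using h(1) unfolding Bh_def K1_def K2_def K3_def Dl_def
      by (simp add: algebra_simps det_swap12[of a b c] det_swap23[of b a c])
    have e2: "(2*K1 - K3) * Dl = 0" using h(2) unfolding Bh_def K1_def K2_def K3_def Dl_def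
      by (simp add: algebra_simps det_swap12[of b a c] det_swap23[of a c b])
    have e3: "(K1 + K2) * Dl = 0" using h(3) unfolding Bh_def K1_def K2_def K3_def Dl_def
      by (simp add: algebra_simps det_swap12[of c b a] det_swap23[of c a b] det_swap12[of a c b] neg_eq_iff_add_eq_0)
    have DL: "Dl \<noteq> 0" using D by (simp add: Dl_def)
    hence f: "2*K2 = K3" "2*K1 = K3" "K1 + K2 = 0" using e1 e2 e3 by auto
    hence "2*K1 = 2*K2" by simp
    hence "K1 = K2" using two by simp
    hence "K1 = 0" "K2 = 0" using f(3) two by (simp_all add: mult_2[symmetric])
    hence "K3 = 0" using f by simp
    have "smult3 Dl x = add3 (add3 (smult3 K1 a) (smult3 K2 b)) (smult3 K3 c)"
      unfolding Dl_def K1_def K2_def K3_def by (rule cramer)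
    hence "smult3 Dl x = (0,0,0)" using \<open>K1 = 0\<close> \<open>K2 = 0\<close> \<open>K3 = 0\<close> by simp
    thus False using DL x by (simp add: smult3_zero_iff)
  qed
qed

lemma harm_form:
  assumes two: "(2::'a::field) \<noteq> 0" and h: "is_harmonic_curve (S :: 'a proj set)"
  shows "\<exists>B. symbil B \<and> nondeg B \<and> S = {P. B (rep P) (rep P) = 0}"
proof -
  obtain A C B D where gp: "general_position A C B D" and S: "S = hcurve A C B D"
    using h unfolding is_harmonic_curve_def by blast
  obtain a b c where n: "det3 a b c \<noteq> 0" "A = pt a" "B = pt b" "C = pt c" "D = pt (add3 (add3 a b) c)"
    using normalize[OF gp] by blast
  have "S = {P. Bh a b c (rep P) (rep P) = 0}"
    unfolding S n using hc_char[OF two n(1)] two by (auto simp: Bh_diag)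
  thus ?thesis using Bh_symbil Bh_nondeg[OF two n(1)] by blast
qed


lemma two_orth: assumes "L \<noteq> (0,0,0)"
  shows "\<exists>u v. dot3 u L = 0 \<and> dot3 v L = 0 \<and> cross3 u v \<noteq> (0,0,0)"
proof -
  obtain l1 l2 l3 where L: "L = (l1,l2,l3)" by (cases L rule: prod_cases3)
  show ?thesis
  proof (cases "l1 = 0")
    case False
    show ?thesis using False
      by (intro exI[of _ "(-l2,l1,0)"] exI[of _ "(-l3,0,l1)"]) (simp add: L algebra_simps)
  next
    case True note t = this
    show ?thesis
    proof (cases "l2 = 0")
      case False
      show ?thesis using False
        by (intro exI[of _ "(l2,-l1,0)"] exI[of _ "(0,-l3,l2)"]) (simp add: L algebra_simps)
    next
      case True
      with t assms have "l3 \<noteq> 0" by (simp add: L)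
      thus ?thesis
        by (intro exI[of _ "(l3,0,-l1)"] exI[of _ "(0,l3,-l2)"]) (simp add: L algebra_simps)
    qed
  qed
qed

lemma other_point: assumes L: "L \<noteq> (0,0,0)" and p: "p \<noteq> (0,0,0)"
  shows "\<exists>x. x \<noteq> (0,0,0) \<and> dot3 x L = 0 \<and> cross3 p x \<noteq> (0,0,0)"
proof -
  obtain u v where uv: "dot3 u L = 0" "dot3 v L = 0" "cross3 u v \<noteq> (0,0,0)" using two_orth[OF L] by blast
  show ?thesis
  proof (cases "cross3 p u = (0,0,0)")
    case False thus ?thesis using uv by (intro exI[of _ u]) auto
  next
    case True
    show ?thesis
    proof (cases "cross3 p v = (0,0,0)")
      case False thus ?thesis using uv by (intro exI[of _ v]) auto
    next
      case True2: True
      obtain k1 where "u = smult3 k1 p" using par_lemma[OF p True] by blast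
      moreover obtain k2 where "v = smult3 k2 p" using par_lemma[OF p True2] by blast
      ultimately have "cross3 u v = (0,0,0)" by (simp add: cross_smults)
      thus ?thesis using uv by simp
    qed
  qed
qed

locale cpol =
  fixes B :: "'a::field vec3 \<Rightarrow> 'a vec3 \<Rightarrow> 'a" and pol :: "'a proj \<Rightarrow> 'a proj"
  assumes two: "(2::'a) \<noteq> 0" and sb: "symbil B" and nd: "nondeg B" and pol: "polarity pol"
    and abs: "absolute_points pol = {P. B (rep P) (rep P) = 0}"
begin

abbreviation "S \<equiv> {P. B (rep P) (rep P) = 0}"

lemma inS: "P \<in> S \<longleftrightarrow> incid P (pol P)"
  using abs unfolding absolute_points_def by blast

lemma pol_sym: "incid P (pol Q) \<longleftrightarrow> incid Q (pol P)"
  using pol unfolding polarity_def by blast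

lemma pol_inj: "pol P = pol Q \<Longrightarrow> P = Q"
  using pol unfolding polarity_def bij_def inj_def by blast

lemma pol_surj: "pol (pole pol l) = l"
  using pol unfolding polarity_def pole_def by (simp add: bij_is_surj surj_f_inv_f)

lemma B_smult: "B (smult3 k x) (smult3 l y) = k * l * B x y"
  by (simp add: symbil_smult1[OF sb] symbil_smult2[OF sb])

lemma inS_pt: assumes "x \<noteq> (0,0,0)" shows "pt x \<in> S \<longleftrightarrow> B x x = 0"
proof -
  obtain k where k: "k \<noteq> 0" "rep (pt x) = smult3 k x" using rep_pt[OF assms] by blast
  show ?thesis using k by (simp add: B_smult)
qed

lemma tan_only: assumes P: "P \<in> S" and X: "X \<in> S" and inc: "incid X (pol P)" shows "X = P"
proof (rule ccontr)
  assume ne: "X \<noteq> P"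
  have "incid P (pol X)" using inc pol_sym by blast
  have "pol P = join X P" using join_unique[OF ne] inc P inS by blast
  moreover have "pol X = join X P" using join_unique[OF ne] \<open>incid P (pol X)\<close> X inS by blast
  ultimately have "pol P = pol X" by simp
  hence "P = X" by (rule pol_inj)
  thus False using ne by simp
qed

lemma pol_tangent: assumes P: "P \<in> S" shows "pol P = pt (cov B (rep P))"
proof -
  define p where "p = rep P"
  define L where "L = rep (pol P)"
  have pnz: "p \<noteq> (0,0,0)" and Lnz: "L \<noteq> (0,0,0)" by (simp_all add: p_def L_def)
  have pL: "dot3 p L = 0" using P inS unfolding p_def L_def incid_def by simp
  have Bpp: "B p p = 0" using P by (simp add: p_def)
  obtain x where x: "x \<noteq> (0,0,0)" "dot3 x L = 0" "cross3 p x \<noteq> (0,0,0)" using other_point[OF Lnz pnz] by blast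
  have polP: "pol P = pt L" by (simp add: L_def)
  have Bpx: "B p x = 0"
  proof (rule ccontr)
    assume h: "B p x \<noteq> 0"
    define y where "y = lc (B x x) p (-2 * B p x) x"
    have nz2: "(B x x, -2 * B p x) \<noteq> (0,0)" using h two by simp
    have ynz: "y \<noteq> (0,0,0)" unfolding y_def by (rule lc_nz[OF x(3) nz2])
    have "B y y = 0" unfolding y_def
      by (simp add: symbil_lc1[OF sb] symbil_lc2[OF sb] Bpp symbil_sym[OF sb, of x p] algebra_simps)
    hence yS: "pt y \<in> S" using inS_pt[OF ynz] by simp
    have "dot3 y L = 0" unfolding y_def by (simp add: dot_lc_left pL x(2))
    hence "incid (pt y) (pol P)" using polP incid_pt[OF ynz Lnz] by simp
    hence "pt y = P" using tan_only[OF P yS] by simp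
    hence "pt y = pt p" by (simp add: p_def)
    hence "cross3 p y = (0,0,0)" using pt_eq_iff[OF pnz ynz] by simp
    moreover have "cross3 p y = smult3 (-2 * B p x) (cross3 p x)" unfolding y_def by (rule cross_u_lc)
    ultimately show False using h two x(3) by (simp add: smult3_zero_iff)
  qed
  have "dot3 p (cov B p) = 0" "dot3 x (cov B p) = 0" using Bpp Bpx by (simp_all add: dot_cov[OF sb])
  then obtain k where k: "cov B p = smult3 k (cross3 p x)" using orth x(3) by blast
  have "cov B p \<noteq> (0,0,0)" using cov_nz[OF sb nd pnz] .
  hence "k \<noteq> 0" using k by auto
  hence e1: "pt (cov B p) = pt (cross3 p x)" using k pt_smult by metis
  obtain k' where k': "L = smult3 k' (cross3 p x)" using orth[OF pL x(2) x(3)] by blast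
  hence "k' \<noteq> 0" using Lnz by auto
  hence "pt L = pt (cross3 p x)" using k' pt_smult by metis
  thus ?thesis using e1 polP by (simp add: p_def)
qed

lemma incid_pol: assumes A: "A \<in> S" shows "incid X (pol A) \<longleftrightarrow> B (rep A) (rep X) = 0"
proof -
  have "cov B (rep A) \<noteq> (0,0,0)" using cov_nz[OF sb nd] by simp
  thus ?thesis using pol_tangent[OF A] incid_pt[of "rep X" "cov B (rep A)"]
    by (metis dot_cov[OF sb] pt_rep rep_nz)
qed

lemma B_ne: assumes A: "A \<in> S" and X: "X \<in> S" and ne: "A \<noteq> X" shows "B (rep A) (rep X) \<noteq> 0"
  using tan_only[OF A X] incid_pol[OF A] ne by metis

lemma pole_meet: assumes A: "A \<in> S" and Bs: "Bp \<in> S" and ne: "A \<noteq> Bp"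
  shows "pole pol (join A Bp) = meet (pol A) (pol Bp)"
    and "pole pol (join A Bp) = pt (cross3 (cov B (rep A)) (cov B (rep Bp)))"
proof -
  define Q where "Q = pole pol (join A Bp)"
  have pQ: "pol Q = join A Bp" unfolding Q_def by (rule pol_surj)
  have "incid A (pol Q)" "incid Bp (pol Q)" using incid_join[OF ne] pQ by simp_all
  hence i: "incid Q (pol A)" "incid Q (pol Bp)" using pol_sym by blast+
  have pne: "pol A \<noteq> pol Bp" using ne pol_inj by blast
  show "pole pol (join A Bp) = meet (pol A) (pol Bp)" using meet_unique[OF pne i] Q_def by simp
  have cn: "cross3 (cov B (rep A)) (cov B (rep Bp)) \<noteq> (0,0,0)"
    using pne pt_eq_iff[OF cov_nz[OF sb nd rep_nz] cov_nz[OF sb nd rep_nz]]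
    by (simp add: pol_tangent[OF A] pol_tangent[OF Bs])
  show "pole pol (join A Bp) = pt (cross3 (cov B (rep A)) (cov B (rep Bp)))"
    using meet_unique[OF pne i] Q_def meet_pt[OF cn] by (simp add: pol_tangent[OF A] pol_tangent[OF Bs])
qed

lemma noncol: assumes A: "A \<in> S" and Bs: "Bp \<in> S" and C: "C \<in> S" and d: "distinct [A, Bp, C]"
  shows "\<not> collinear3 A Bp C"
proof
  assume "collinear3 A Bp C"
  then obtain l where l: "incid A l" "incid Bp l" "incid C l" unfolding collinear3_def by blast
  have ne: "A \<noteq> Bp" using d by simp
  have "l = join A Bp" using join_unique[OF ne l(1,2)] .
  hence "l = pt (cross3 (rep A) (rep Bp))" using join_rep[OF ne] by simp
  hence "dot3 (rep C) (cross3 (rep A) (rep Bp)) = 0"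
    using l(3) incid_pt[OF rep_nz neq_cross[OF ne]] by (metis pt_rep)
  hence "det3 (rep A) (rep Bp) (rep C) = 0" by (simp add: det3_def dot3_comm)
  then obtain s t where st: "rep C = lc s (rep A) t (rep Bp)" using span[OF neq_cross[OF ne]] by blast
  have "B (rep C) (rep C) = 0" using C by simp
  hence "2 * s * t * B (rep A) (rep Bp) = 0" unfolding st
    using A Bs by (simp add: symbil_lc1[OF sb] symbil_lc2[OF sb] symbil_sym[OF sb, of "rep Bp" "rep A"] algebra_simps)
  hence "s = 0 \<or> t = 0" using B_ne[OF A Bs ne] two by simp
  thus False
  proof
    assume "s = 0"
    hence "rep C = smult3 t (rep Bp)" using st by (simp add: lc_def)
    hence "t \<noteq> 0" using rep_nz[of C] by auto
    hence "C = Bp" using \<open>rep C = smult3 t (rep Bp)\<close> pt_smult by (metis pt_rep)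
    thus False using d by simp
  next
    assume "t = 0"
    hence "rep C = smult3 s (rep A)" using st by (simp add: lc_def)
    hence "s \<noteq> 0" using rep_nz[of C] by auto
    hence "C = A" using \<open>rep C = smult3 s (rep A)\<close> pt_smult by (metis pt_rep)
    thus False using d by simp
  qed
qed

end


context cpol begin

lemma pol_pt: assumes x: "x \<noteq> (0,0,0)" and S: "pt x \<in> S" shows "pol (pt x) = pt (cov B x)"
proof -
  obtain k where k: "k \<noteq> 0" "rep (pt x) = smult3 k x" using rep_pt[OF x] by blast
  have "pol (pt x) = pt (smult3 k (cov B x))" using pol_tangent[OF S] k by (simp add: cov_smult[OF sb])
  thus ?thesis using pt_smult[OF k(1)] by simp
qed

lemma B_ne_pt: assumes x: "x \<noteq> (0,0,0)" and y: "y \<noteq> (0,0,0)" and Sx: "pt x \<in> S" and Sy: "pt y \<in> S"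
  and ne: "pt x \<noteq> pt y" shows "B x y \<noteq> 0"
proof -
  obtain k where k: "k \<noteq> 0" "rep (pt x) = smult3 k x" using rep_pt[OF x] by blast
  obtain l where l: "l \<noteq> 0" "rep (pt y) = smult3 l y" using rep_pt[OF y] by blast
  have "B (rep (pt x)) (rep (pt y)) \<noteq> 0" using B_ne[OF Sx Sy ne] .
  thus ?thesis using k l by (simp add: B_smult)
qed

lemma B_coords:
  assumes "B a a = 0" "B b b = 0" "B c c = 0"
  shows "(det3 a b c)^2 * B z z = 2*(B a b * det3 z b c * det3 a z c + B a c * det3 z b c * det3 a b z + B b c * det3 a z c * det3 a b z)"
proof -
  have "B (smult3 (det3 a b c) z) (smult3 (det3 a b c) z) = (det3 a b c)^2 * B z z"
    by (simp add: B_smult power2_eq_square)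
  moreover have "B (smult3 (det3 a b c) z) (smult3 (det3 a b c) z) = 
     2*(B a b * det3 z b c * det3 a z c + B a c * det3 z b c * det3 a b z + B b c * det3 a z c * det3 a b z)"
    unfolding cramer[of a b c z]
    by (simp add: symbil_add1[OF sb] symbil_add2[OF sb] symbil_smult1[OF sb] symbil_smult2[OF sb]
        symbil_sym[OF sb, of b a] symbil_sym[OF sb, of c a] symbil_sym[OF sb, of c b] assms algebra_simps)
  ultimately show ?thesis by simp
qed

lemma part1:
  assumes gp: "general_position A C Bp D" and sub: "{A, C, Bp, D} \<subseteq> S"
  shows "hcurve A C Bp D = S \<longleftrightarrow> incid (pole pol (join A Bp)) (join C D)"
proof -
  obtain a b c where n: "det3 a b c \<noteq> 0" "A = pt a" "Bp = pt b" "C = pt c" "D = pt (add3 (add3 a b) c)"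
    using normalize[OF gp] by blast
  define d where "d = add3 (add3 a b) c"
  define Dl where "Dl = det3 a b c"
  have DL: "Dl \<noteq> 0" using n(1) by (simp add: Dl_def)
  have anz: "a \<noteq> (0,0,0)" and bnz: "b \<noteq> (0,0,0)" and cnz: "c \<noteq> (0,0,0)"
    using n(1) by (auto simp: det3_def)
  have "det3 a b d = Dl" by (simp add: d_def Dl_def det_lin)
  hence dnz: "d \<noteq> (0,0,0)" using DL by (auto simp: det3_def)
  have hc: "hcurve A C Bp D = {Z. hq a b c (rep Z) = 0}"
    using hc_char[OF two n(1)] n d_def by auto
  have dist: "distinct [A, C, Bp, D]" using gp unfolding general_position_def by simp
  have SA: "pt a \<in> S" and SB: "pt b \<in> S" and SC: "pt c \<in> S" and SD: "pt d \<in> S"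
    using sub n d_def by auto
  have Baa: "B a a = 0" using SA inS_pt[OF anz] by simp
  have Bbb: "B b b = 0" using SB inS_pt[OF bnz] by simp
  have Bcc: "B c c = 0" using SC inS_pt[OF cnz] by simp
  have Bdd: "B d d = 0" using SD inS_pt[OF dnz] by simp
  define la where "la = B a b"
  define mu where "mu = B a c"
  define nu where "nu = B b c"
  have lanz: "la \<noteq> 0" unfolding la_def using B_ne_pt[OF anz bnz SA SB] dist n by simp
  have munz: "mu \<noteq> 0" unfolding mu_def using B_ne_pt[OF anz cnz SA SC] dist n by simp
  have "pt b \<noteq> pt c" using dist n by auto
  hence nunz: "nu \<noteq> 0" unfolding nu_def using B_ne_pt[OF bnz cnz SB SC] by simp
  have "B d d = 2 * (la + mu + nu)" unfolding d_def la_def mu_def nu_def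
    by (simp add: symbil_add1[OF sb] symbil_add2[OF sb] symbil_sym[OF sb, of b a] symbil_sym[OF sb, of c a]
        symbil_sym[OF sb, of c b] Baa Bbb Bcc algebra_simps)
  hence sum: "la + mu + nu = 0" using Bdd two by (metis mult_eq_0_iff)
  hence la_eq: "la = -(mu + nu)" by (metis add.assoc add_eq_0_iff2)
  have pA: "pol A = pt (cov B a)" using pol_pt[OF anz SA] n by simp
  have pB: "pol Bp = pt (cov B b)" using pol_pt[OF bnz SB] n by simp
  have neAB: "A \<noteq> Bp" using dist by simp
  have "pol A \<noteq> pol Bp" using neAB pol_inj by blast
  hence ccnz: "cross3 (cov B a) (cov B b) \<noteq> (0,0,0)"
    using pt_eq_iff[OF cov_nz[OF sb nd anz] cov_nz[OF sb nd bnz]] pA pB by simp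
  have SAA: "A \<in> S" "Bp \<in> S" using sub by auto
  have Q: "pole pol (join A Bp) = pt (cross3 (cov B a) (cov B b))"
    using pole_meet(1)[OF SAA neAB] pA pB meet_pt[OF ccnz] by simp
  have "C \<noteq> D" using dist by simp
  hence cdnz: "cross3 c d \<noteq> (0,0,0)" using pt_eq_iff[OF cnz dnz] n d_def by auto
  have jCD: "join C D = pt (cross3 c d)" using join_pt[OF cdnz] n d_def by simp
  have "incid (pole pol (join A Bp)) (join C D) \<longleftrightarrow> dot3 (cross3 (cov B a) (cov B b)) (cross3 c d) = 0"
    unfolding Q jCD by (rule incid_pt[OF ccnz cdnz])
  also have "\<dots> \<longleftrightarrow> B a c * B b d - B a d * B b c = 0"
    by (simp add: binet_cauchy dot3_comm[of "cov B _"] dot_cov[OF sb])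
  also have "\<dots> \<longleftrightarrow> la * (mu - nu) = 0"
    unfolding d_def la_def mu_def nu_def
    by (simp add: symbil_add2[OF sb] symbil_sym[OF sb, of b a] Baa Bbb algebra_simps)
  finally have pole_iff: "incid (pole pol (join A Bp)) (join C D) \<longleftrightarrow> mu = nu" using lanz by simp
  have coordS: "Z \<in> S \<longleftrightarrow> la * det3 (rep Z) b c * det3 a (rep Z) c + mu * det3 (rep Z) b c * det3 a b (rep Z)
          + nu * det3 a (rep Z) c * det3 a b (rep Z) = 0" for Z
  proof -
    define X where "X = la * det3 (rep Z) b c * det3 a (rep Z) c + mu * det3 (rep Z) b c * det3 a b (rep Z)
          + nu * det3 a (rep Z) c * det3 a b (rep Z)"
    have e: "Dl^2 * B (rep Z) (rep Z) = 2 * X"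
      unfolding X_def la_def mu_def nu_def Dl_def by (rule B_coords[OF Baa Bbb Bcc])
    have D2: "Dl^2 \<noteq> 0" using DL by simp
    have "Z \<in> S \<longleftrightarrow> Dl^2 * B (rep Z) (rep Z) = 0" using DL by simp
    also have "\<dots> \<longleftrightarrow> X = 0" unfolding e using two by simp
    finally show ?thesis unfolding X_def .
  qed
  show ?thesis
  proof
    assume h: "hcurve A C Bp D = S"
    show "incid (pole pol (join A Bp)) (join C D)"
    proof (rule ccontr)
      assume "\<not> incid (pole pol (join A Bp)) (join C D)"
      hence mn: "mu \<noteq> nu" using pole_iff by simp
      show False
      proof (cases "\<exists>t::'a. t \<noteq> 0 \<and> t \<noteq> 1 \<and> t \<noteq> -1")
        case True
        then obtain t :: 'a where t: "t \<noteq> 0" "t \<noteq> 1" "t \<noteq> -1" by blast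
        define z where "z = add3 (add3 (smult3 (1+t) a) (smult3 (t*(1+t)) b)) (smult3 (2*t) c)"
        have k3: "det3 a b z = 2*t*Dl" unfolding z_def Dl_def by (simp add: det_lin)
        have k1: "det3 z b c = (1+t)*Dl" unfolding z_def Dl_def by (simp add: det_lin)
        have k2: "det3 a z c = t*(1+t)*Dl" unfolding z_def Dl_def by (simp add: det_lin)
        have t1: "1 + t \<noteq> 0" using t(3) by (metis add.commute add_eq_0_iff)
        have "det3 a b z \<noteq> 0" using k3 t two DL by simp
        hence znz: "z \<noteq> (0,0,0)" by (auto simp: det3_def)
        obtain k where k: "k \<noteq> 0" "rep (pt z) = smult3 k z" using rep_pt[OF znz] by blast
        have "hq a b c z = 0" unfolding hq_def k1 k2 k3 by (simp add: algebra_simps)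
        hence "hq a b c (rep (pt z)) = 0" using k by (simp add: hq_smult)
        hence "pt z \<in> S" using hc h by auto
        hence Bzz: "B z z = 0" using inS_pt[OF znz] by simp
        have "B z z = 2*((1+t)*(t*(1+t))*la + (1+t)*(2*t)*mu + (t*(1+t))*(2*t)*nu)"
          unfolding z_def la_def mu_def nu_def
          by (simp add: symbil_add1[OF sb] symbil_add2[OF sb] symbil_smult1[OF sb] symbil_smult2[OF sb]
            symbil_sym[OF sb, of b a] symbil_sym[OF sb, of c a] symbil_sym[OF sb, of c b] Baa Bbb Bcc algebra_simps)
        also have "\<dots> = 2*t*(1+t)*((nu - mu)*(t - 1))"
          unfolding la_eq by (simp add: algebra_simps)
        finally have "B z z = 2*t*(1+t)*((nu - mu)*(t - 1))" .
        moreover have "nu - mu \<noteq> 0" "t - 1 \<noteq> 0" using mn t by auto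
        ultimately show False using Bzz two t t1 by simp
      next
        case False
        hence all: "\<And>t::'a. t = 0 \<or> t = 1 \<or> t = -1" by blast
        have "mu = 1 \<or> mu = -1" using all[of mu] munz by auto
        moreover have "nu = 1 \<or> nu = -1" using all[of nu] nunz by auto
        ultimately have "mu = - nu" using mn by auto
        hence "la = 0" using sum by simp
        thus False using lanz by simp
      qed
    qed
  next
    assume "incid (pole pol (join A Bp)) (join C D)"
    hence mn: "mu = nu" using pole_iff by simp
    hence la2: "la = -2*mu" using la_eq by simp
    show "hcurve A C Bp D = S"
    proof (rule set_eqI)
      fix Z
      have "Z \<in> S \<longleftrightarrow> (-mu) * hq a b c (rep Z) = 0"
        unfolding coordS hq_def using mn la2 by (simp add: algebra_simps)
      also have "\<dots> \<longleftrightarrow> Z \<in> hcurve A C Bp D" unfolding hc using munz by simp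
      finally show "Z \<in> hcurve A C Bp D \<longleftrightarrow> Z \<in> S" by simp
    qed
  qed
qed

end


context cpol begin

lemma part2:
  assumes d3: "distinct [A, C, Bp]" and sub: "{A, C, Bp} \<subseteq> S"
  shows "pole pol (join A Bp) = meet (pol A) (pol Bp) \<and>
         general_position A C Bp (harm_refl (pole pol (join A Bp)) (join A Bp) C) \<and>
         harm_refl (pole pol (join A Bp)) (join A Bp) C \<in> S \<and>
         hcurve A C Bp (harm_refl (pole pol (join A Bp)) (join A Bp) C) = S"
proof -
  have SA: "A \<in> S" and SB: "Bp \<in> S" and SC: "C \<in> S" using sub by auto
  have neAB: "A \<noteq> Bp" and neAC: "A \<noteq> C" and neCB: "C \<noteq> Bp" using d3 by auto
  define a where "a = rep A"
  define b where "b = rep Bp"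
  define c where "c = rep C"
  have anz: "a \<noteq> (0,0,0)" and bnz: "b \<noteq> (0,0,0)" and cnz: "c \<noteq> (0,0,0)" by (simp_all add: a_def b_def c_def)
  define q where "q = join A Bp"
  define Q where "Q = pole pol q"
  define L where "L = cross3 a b"
  define w where "w = cross3 (cov B a) (cov B b)"
  have Lnz: "L \<noteq> (0,0,0)" unfolding L_def a_def b_def by (rule neq_cross[OF neAB])
  have qL: "q = pt L" unfolding q_def L_def a_def b_def by (rule join_rep[OF neAB])
  have Qw: "Q = pt w" unfolding Q_def q_def w_def a_def b_def by (rule pole_meet(2)[OF SA SB neAB])
  have pA: "pol A = pt (cov B a)" using pol_tangent[OF SA] by (simp add: a_def)
  have pB: "pol Bp = pt (cov B b)" using pol_tangent[OF SB] by (simp add: b_def)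
  have "pol A \<noteq> pol Bp" using neAB pol_inj by blast
  hence wnz: "w \<noteq> (0,0,0)"
    using pt_eq_iff[OF cov_nz[OF sb nd anz] cov_nz[OF sb nd bnz]] pA pB by (simp add: w_def)
  have Baa: "B a a = 0" and Bbb: "B b b = 0" and Bcc: "B c c = 0" using SA SB SC by (simp_all add: a_def b_def c_def)
  have Bab: "B a b \<noteq> 0" using B_ne[OF SA SB neAB] by (simp add: a_def b_def)
  define al where "al = dot3 c L"
  define be where "be = dot3 w L"
  have "\<not> collinear3 A Bp C" using noncol[OF SA SB SC] d3 by auto
  hence "det3 a b c \<noteq> 0" unfolding a_def b_def c_def by (rule det_nz_of_noncol)
  hence alnz: "al \<noteq> 0" by (simp add: al_def L_def det3_def dot3_comm)
  have "be = B a a * B b b - B a b * B b a"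
    by (simp add: be_def w_def L_def binet_cauchy dot3_comm[of "cov B _"] dot_cov[OF sb])
  hence be_eq: "be = - (B a b * B a b)" using Baa Bbb symbil_sym[OF sb, of b a] by simp
  hence benz: "be \<noteq> 0" using Bab by simp
  have Qnq: "\<not> incid Q q" using incid_pt[OF wnz Lnz] Qw qL benz by (simp add: be_def)
  have Cnq: "\<not> incid C q" using incid_pt[OF cnz Lnz] qL alnz by (simp add: al_def c_def)
  have QnS: "Q \<notin> S"
  proof
    assume QS: "Q \<in> S"
    have "Q = meet (pol A) (pol Bp)" using pole_meet(1)[OF SA SB neAB] by (simp add: Q_def q_def)
    hence "incid Q (pol A)" "incid Q (pol Bp)" using incid_meet \<open>pol A \<noteq> pol Bp\<close> by auto
    hence "Q = A" "Q = Bp" using tan_only[OF SA QS] tan_only[OF SB QS] by auto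
    thus False using neAB by simp
  qed
  hence CQ: "C \<noteq> Q" using SC by auto
  have cw: "cross3 c w \<noteq> (0,0,0)" using pt_eq_iff[OF cnz wnz] CQ Qw by (simp add: c_def)
  hence wc: "cross3 w c \<noteq> (0,0,0)" using cross_anti[of c w] by (auto simp: smult3_zero_iff)
  define m where "m = lc al w (- be) c"
  have m_eq: "cross3 (cross3 c w) L = m" unfolding m_def al_def be_def lc_def by (simp add: triple_cross)
  have wm: "cross3 w m = smult3 (- be) (cross3 w c)" unfolding m_def by (rule cross_u_lc)
  hence wmnz: "cross3 w m \<noteq> (0,0,0)" using benz wc by (simp add: smult3_zero_iff)
  have mnz: "m \<noteq> (0,0,0)" using wmnz by auto
  have jCQ: "join C Q = pt (cross3 c w)" using join_pt[OF cw] Qw by (simp add: c_def)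
  have cwL: "cross3 (cross3 c w) L \<noteq> (0,0,0)" using mnz m_eq by simp
  have M: "meet (join C Q) q = pt m" using meet_pt[OF cwL] jCQ qL m_eq by simp
  have c_eq: "smult3 (- be) c = lc (- al) w 1 m"
    unfolding m_def lc_def by (cases w rule: prod_cases3, cases c rule: prod_cases3) (simp add: algebra_simps)
  have n1: "(- al, 1::'a) \<noteq> (0,0)" and n2: "(al, 1::'a) \<noteq> (0,0)" by simp_all
  have Cpt: "C = pt (lc (- al) w 1 m)" using pt_of_eq[OF c_eq _ cnz] benz by (simp add: c_def)
  define d where "d = lc al w 1 m"
  have dnz: "d \<noteq> (0,0,0)" unfolding d_def by (rule lc_nz[OF wmnz n2])
  have hsD: "harmonic_set (pt w) (pt m) C (pt d)"
    unfolding Cpt d_def using hs_formula[OF two wmnz n1 n2] alnz by simp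
  have conj: "harm_conj Q (pt m) C = pt d" unfolding harm_conj_def Qw
  proof (rule the_equality)
    show "harmonic_set (pt w) (pt m) C (pt d)" by (rule hsD)
  next
    fix Y assume hY: "harmonic_set (pt w) (pt m) C Y"
    then obtain l where l: "incid (pt w) l" "incid (pt m) l" "incid Y l"
      unfolding harmonic_set_def collinear4_def by blast
    have ne: "pt w \<noteq> pt m" using pt_eq_iff[OF wnz mnz] wmnz by simp
    have "l = join (pt w) (pt m)" using join_unique[OF ne l(1,2)] .
    hence "l = pt (cross3 w m)" using join_pt[OF wmnz] by simp
    hence "dot3 (rep Y) (cross3 w m) = 0" using l(3) incid_pt[OF rep_nz wmnz] by (metis pt_rep)
    hence "det3 w m (rep Y) = 0" by (simp add: det3_def dot3_comm)
    then obtain ga de where y: "rep Y = lc ga w de m" using span[OF wmnz] by blast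
    have gd: "(ga, de) \<noteq> (0,0)" using y rep_nz[of Y] by (auto simp: lc_def)
    have "Y = pt (lc ga w de m)" using y by (metis pt_rep)
    hence "harmonic_set (pt w) (pt m) (pt (lc (- al) w 1 m)) (pt (lc ga w de m))" using hY Cpt by simp
    hence h: "(-al)*de \<noteq> 0 \<and> 1*ga = -((-al)*de)" using hs_formula[OF two wmnz n1 gd] by blast
    hence "de \<noteq> 0" by auto
    have "lc ga w de m = smult3 de d" using h unfolding d_def by (simp add: smult_lc algebra_simps)
    hence "pt (lc ga w de m) = pt d" using pt_smult[OF \<open>de \<noteq> 0\<close>] by simp
    thus "Y = pt d" using \<open>Y = pt (lc ga w de m)\<close> by simp
  qed
  have hr: "harm_refl Q q C = pt d" unfolding harm_refl_def using CQ Cnq M conj by simp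
  have d_eq: "d = lc (2*al) w (- be) c"
    unfolding d_def m_def lc_def by (cases w rule: prod_cases3, cases c rule: prod_cases3) (simp add: algebra_simps)
  have "dot3 a (cov B w) = dot3 w (cov B a)" "dot3 b (cov B w) = dot3 w (cov B b)"
    by (simp_all only: dot_cov[OF sb] symbil_sym[OF sb, of w])
  hence "dot3 a (cov B w) = 0" "dot3 b (cov B w) = 0" by (simp_all add: w_def)
  then obtain k where k: "cov B w = smult3 k L" using orth neq_cross[OF neAB] by (metis L_def a_def b_def)
  have Bw: "B w x = k * dot3 x L" for x using dot_cov[OF sb, of x w] k by (simp add: dot3_smult_right)
  have "B d d = 4*al*al * B w w - 4*al*be * B w c + be*be * B c c"
    unfolding d_eq by (simp add: symbil_lc1[OF sb] symbil_lc2[OF sb] symbil_sym[OF sb, of c w] algebra_simps)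
  also have "\<dots> = 0" using Bcc Bw[of w] Bw[of c] by (simp add: al_def be_def algebra_simps)
  finally have Bdd: "B d d = 0" .
  have DS: "pt d \<in> S" using inS_pt[OF dnz] Bdd by simp
  have "dot3 d L = al * be" unfolding d_eq by (simp add: dot_lc_left al_def be_def algebra_simps)
  hence dL: "dot3 d L \<noteq> 0" using alnz benz by simp
  have "incid A q" "incid Bp q" using incid_join[OF neAB] by (simp_all add: q_def)
  moreover have "\<not> incid (pt d) q" using incid_pt[OF dnz Lnz] qL dL by simp
  ultimately have DA: "pt d \<noteq> A" and DB: "pt d \<noteq> Bp" by auto
  have "cross3 c d = smult3 (2*al) (cross3 c w)" unfolding d_eq
    by (simp add: lc_def cross_add_right cross_smult_right)
  hence "cross3 c d \<noteq> (0,0,0)" using alnz two cw by (simp add: smult3_zero_iff)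
  hence DC: "pt d \<noteq> C" using pt_eq_iff[OF cnz dnz] by (auto simp: c_def)
  have dist4: "distinct [A, C, Bp, pt d]" using d3 DA DB DC by auto
  have gp: "general_position A C Bp (pt d)"
    unfolding general_position_def
    using dist4 noncol[OF SA SC SB] noncol[OF SA SC DS] noncol[OF SA SB DS] noncol[OF SC SB DS] by auto
  have "C \<noteq> pt d" using DC by simp
  have cdnz: "cross3 c d \<noteq> (0,0,0)" using \<open>cross3 c d \<noteq> (0,0,0)\<close> .
  have "incid Q (join C (pt d))"
  proof -
    have "join C (pt d) = pt (cross3 c d)" using join_pt[OF cdnz] by (simp add: c_def)
    moreover have "dot3 w (cross3 c d) = 0" using \<open>cross3 c d = smult3 (2*al) (cross3 c w)\<close>
      by (simp add: dot3_smult_right)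
    ultimately show ?thesis using incid_pt[OF wnz cdnz] Qw by simp
  qed
  hence hc: "hcurve A C Bp (pt d) = S"
    using part1[OF gp] sub DS by (simp add: Q_def q_def)
  show ?thesis
    using pole_meet(1)[OF SA SB neAB] gp DS hc hr by (simp add: Q_def q_def)
qed

end


theorem mainTheorem8:
  fixes S :: "'a::field point set"
    and pol :: "'a point \<Rightarrow> 'a line"
  assumes char_not_2: "(2::'a) \<noteq> 0"
    and harm: "is_harmonic_curve S"
    and pol: "polarity pol"
    and abs: "absolute_points pol = S"
  shows "(\<forall>A C B D. general_position A C B D \<and> {A, C, B, D} \<subseteq> S \<longrightarrow>
            (hcurve A C B D = S \<longleftrightarrow> incid (pole pol (join A B)) (join C D)))
       \<and> (\<forall>A C B. distinct [A, C, B] \<and> {A, C, B} \<subseteq> S \<longrightarrow>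
            (let q = join A B; Q = pole pol q; D = harm_refl Q q C in
               Q = meet (pol A) (pol B) \<and>
               general_position A C B D \<and> D \<in> S \<and> hcurve A C B D = S))"
proof -
  obtain Bf where Bf: "symbil Bf" "nondeg Bf" "S = {P. Bf (rep P) (rep P) = 0}"
    using harm_form[OF char_not_2 harm] by blast
  interpret X: cpol Bf pol
    by unfold_locales (use char_not_2 Bf pol abs in auto)
  have 1: "\<forall>A C B D. general_position A C B D \<and> {A, C, B, D} \<subseteq> S \<longrightarrow>
            (hcurve A C B D = S \<longleftrightarrow> incid (pole pol (join A B)) (join C D))"
    using X.part1 unfolding Bf(3) by blast
  have 2: "\<forall>A C B. distinct [A, C, B] \<and> {A, C, B} \<subseteq> S \<longrightarrow>
            (let q = join A B; Q = pole pol q; D = harm_refl Q q C in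
               Q = meet (pol A) (pol B) \<and>
               general_position A C B D \<and> D \<in> S \<and> hcurve A C B D = S)"
    unfolding Let_def using X.part2 unfolding Bf(3) by blast
  show ?thesis using 1 2 by blast
qed

end
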